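(* Let $\{A_1,A_2,A_3\}$ be a gyrobarycentrically independent set in the Einstein gyrovector plane $\mathbb{R}^2_s$, $\gamma_{ij}=\gamma_{\ominus A_i\oplus A_j}$, and let $C(A_1A_2A_3)$ be the circumgyrocircle of gyrotriangle $A_1A_2A_3$. Let $P=\frac{m_1\gamma_{A_1}A_1+m_2\gamma_{A_2}A_2+m_3\gamma_{A_3}A_3}{m_1\gamma_{A_1}+m_2\gamma_{A_2}+m_3\gamma_{A_3}}\in\mathbb{R}^2_s$. Put $\Delta_1=m_1m_2(\gamma_{12}-1)+m_1m_3(\gamma_{13}-1)+m_2m_3(\gamma_{23}-1)$, $\Delta_2=(\gamma_{12}-1)(\gamma_{13}-1)(\gamma_{23}-1)>0$, $F_0=m_1(\gamma_{12}-1)+m_3(\gamma_{23}-1)$, $F_1=m_1(\gamma_{12}-1)(\gamma_{13}-1)\pm\sqrt{-\Delta_1\Delta_2}$, $F_2=-m_3(\gamma_{13}-1)(\gamma_{23}-1)\pm\sqrt{-\Delta_1\Delta_2}$. Then the two tangency points $P_\pm$ of the gyrotangent gyrolines of $C(A_1A_2A_3)$ through $P$, when they exist, are $P_\pm=\frac{m_1'\gamma_{A_1}A_1+m_2'\gamma_{A_2}A_2+m_3'\gamma_{A_3}A_3}{m_1'\gamma_{A_1}+m_2'\gamma_{A_2}+m_3'\gamma_{A_3}}$ with $m_1'=F_0F_1(\gamma_{23}-1)$, $m_2'=F_1F_2$, $m_3'=-F_0F_2(\gamma_{12}-1)$. Moreover: (1) two distinct tangency points exist iff $\Delta_1<0$,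 iff $P$ lies in the exterior of $C(A_1A_2A_3)$; (2) they degenerate to a single one, $P_\pm=P$, iff $\Delta_1=0$, iff $P$ lies on $C(A_1A_2A_3)$; (3) there are none iff $\Delta_1>0$, iff $P$ lies in the interior. The constant $m_{P_\pm}$ of the representation of $P_\pm$ (where $m_{P_\pm}^2=\sum_k(m_k')^2+2(m_1'm_2'\gamma_{12}+m_1'm_3'\gamma_{13}+m_2'm_3'\gamma_{23})$) is $m_{P_\pm}=\Delta_2E_1\pm\sqrt{-\Delta_1\Delta_2}\,E_2$, where $E_1=(m_1-m_2+m_3)\{m_1(\gamma_{12}-1)+m_3(\gamma_{23}-1)\}-2m_1m_3(\gamma_{13}-1)$ and $E_2=-m_1(\gamma_{12}-1)^2+m_3(\gamma_{23}-1)^2+m_1(\gamma_{12}-1)(\gamma_{13}-1)-m_3(\gamma_{13}-1)(\gamma_{23}-1)+(m_1-m_3)(\gamma_{12}-1)(\gamma_{23}-1)$.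
   Context: Fix $s>0$; $\mathbb{R}^2_s=\{v\in\mathbb{R}^2:\|v\|<s\}$ with Einstein addition $u\oplus v=\frac{1}{1+u\cdot v/s^2}\{u+\frac{1}{\gamma_u}v+\frac{1}{s^2}\frac{\gamma_u}{1+\gamma_u}(u\cdot v)u\}$, $\gamma_v=(1-\|v\|^2/s^2)^{-1/2}$, $\ominus v=-v$; gyrodistance $\|\ominus X\oplus Y\|$. Gyrolines are intersections of Euclidean lines with the disc. Gyrobarycentric independence of $\{A_1,A_2,A_3\}$: $\ominus A_1\oplus A_2,\ominus A_1\oplus A_3$ linearly independent. The circumgyrocircle of $A_1A_2A_3$ is the set of points at gyrodistance $R$ from the point $O\in\mathbb{R}^2_s$ equigyrodistant (gyrodistance $R$) from $A_1,A_2,A_3$; interior/exterior: gyrodistance to $O$ less/greater than $R$. A gyrotangent gyroline meets the gyrocircle in exactly one point, its tangency point. *)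

theory Defs
  imports "HOL-Analysis.Analysis"
begin

definition gdisc :: "real \<Rightarrow> (real^2) set" where
  "gdisc s = {v. norm v < s}"

definition egamma :: "real \<Rightarrow> real^2 \<Rightarrow> real" where
  "egamma s v = 1 / sqrt (1 - (norm v)\<^sup>2 / s\<^sup>2)"

definition eplus :: "real \<Rightarrow> real^2 \<Rightarrow> real^2 \<Rightarrow> real^2" where
  "eplus s u v = (1 / (1 + (u \<bullet> v) / s\<^sup>2)) *\<^sub>R
      (u + (1 / egamma s u) *\<^sub>R v
         + ((1 / s\<^sup>2) * (egamma s u / (1 + egamma s u)) * (u \<bullet> v)) *\<^sub>R u)"

definition gyrodist :: "real \<Rightarrow> real^2 \<Rightarrow> real^2 \<Rightarrow> real" where
  "gyrodist s X Y = norm (eplus s (- X) Y)"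

definition gyrobary_indep :: "real \<Rightarrow> real^2 \<Rightarrow> real^2 \<Rightarrow> real^2 \<Rightarrow> bool" where
  "gyrobary_indep s A1 A2 A3 \<longleftrightarrow>
     (\<forall>c1 c2::real. c1 *\<^sub>R eplus s (- A1) A2 + c2 *\<^sub>R eplus s (- A1) A3 = 0 \<longrightarrow> c1 = 0 \<and> c2 = 0)"

definition gbary :: "real \<Rightarrow> real^2 \<Rightarrow> real^2 \<Rightarrow> real^2 \<Rightarrow> real \<Rightarrow> real \<Rightarrow> real \<Rightarrow> real^2" where
  "gbary s A1 A2 A3 m1 m2 m3 =
     (1 / (m1 * egamma s A1 + m2 * egamma s A2 + m3 * egamma s A3)) *\<^sub>R
       ((m1 * egamma s A1) *\<^sub>R A1 + (m2 * egamma s A2) *\<^sub>R A2 + (m3 * egamma s A3) *\<^sub>R A3)"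

definition gcircle :: "real \<Rightarrow> real^2 \<Rightarrow> real \<Rightarrow> (real^2) set" where
  "gcircle s Oc R = {X \<in> gdisc s. gyrodist s Oc X = R}"

definition gline :: "real \<Rightarrow> real^2 \<Rightarrow> real^2 \<Rightarrow> (real^2) set" where
  "gline s P d = {X \<in> gdisc s. \<exists>t::real. X = P + t *\<^sub>R d}"

definition tangency_point :: "real \<Rightarrow> (real^2) set \<Rightarrow> real^2 \<Rightarrow> real^2 \<Rightarrow> bool" where
  "tangency_point s C P T \<longleftrightarrow> (\<exists>d. d \<noteq> 0 \<and> gline s P d \<inter> C = {T})"

end

theory Submission
  imports Defs
begin


lemma egamma_props:
  assumes s: "s > 0" and u: "norm u < s"
  shows "egamma s u > 0" "(egamma s u)^2 * (1 - (norm u)^2/s^2) = 1"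
proof -
  have "(norm u)^2 < s^2" using u by (simp add: power_strict_mono)
  hence p: "1 - (norm u)^2/s^2 > 0" using s by (simp add: field_simps)
  show "egamma s u > 0" using p by (simp add: egamma_def)
  show "(egamma s u)^2 * (1 - (norm u)^2/s^2) = 1" using p \<open>(norm u)^2 < s^2\<close>
    by (simp add: egamma_def power_divide)
qed

lemma eplus_norm:
  assumes s: "s > 0" and u: "norm u < s" and d: "1 + (u \<bullet> v)/s^2 \<noteq> 0"
  shows "(norm (eplus s u v))^2 = s^2 - s^2 * (1 - (norm u)^2/s^2) * (1 - (norm v)^2/s^2) / (1 + (u \<bullet> v)/s^2)^2"
proof -
  define g where "g = egamma s u"
  have gp: "g > 0" and gr: "g^2 * (1 - (norm u)^2/s^2) = 1" using egamma_props[OF s u] g_def by auto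
  define a where "a = u \<bullet> u"
  define b where "b = v \<bullet> v"
  define p where "p = u \<bullet> v"
  have na: "(norm u)^2 = a" "(norm v)^2 = b" by (simp_all add: a_def b_def power2_norm_eq_inner)
  define k where "k = (1 / s\<^sup>2) * (g / (1 + g)) * p"
  have e: "eplus s u v = (1 / (1 + p / s\<^sup>2)) *\<^sub>R (u + (1/g) *\<^sub>R v + k *\<^sub>R u)"
    by (simp add: eplus_def g_def k_def p_def)
  have "(norm (eplus s u v))^2 = (1 / (1 + p / s\<^sup>2))^2 * ((u + (1/g) *\<^sub>R v + k *\<^sub>R u) \<bullet> (u + (1/g) *\<^sub>R v + k *\<^sub>R u))"
    unfolding e power2_norm_eq_inner by (simp add: power2_eq_square)
  also have "(u + (1/g) *\<^sub>R v + k *\<^sub>R u) \<bullet> (u + (1/g) *\<^sub>R v + k *\<^sub>R u)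
     = a + b/g^2 + k^2 * a + 2*p/g + 2*k*a + 2*k*p/g"
    by (simp add: inner_add_left inner_add_right a_def b_def p_def inner_commute power2_eq_square algebra_simps)
  finally have n: "(norm (eplus s u v))^2 = (1 / (1 + p / s\<^sup>2))^2 * (a + b/g^2 + k^2 * a + 2*p/g + 2*k*a + 2*k*p/g)" .
  have d': "s^2 + p \<noteq> 0" using d s by (simp add: field_simps p_def)
  have ga: "a = s^2 - s^2/g^2" using gr gp s by (simp add: na field_simps)
  have key: "a + b/g^2 + k^2 * a + 2*p/g + 2*k*a + 2*k*p/g = (1 + p/s^2)^2 * s^2 - s^2 * (1 - a/s^2) * (1 - b/s^2)"
  proof -
    have g1: "1 + g > 0" using gp by simp
    have kr: "k*(1+g) = g*p/s^2" unfolding k_def using g1 by simp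
    have ga2: "a = s^2 * (g-1)*(1+g)/g^2" unfolding ga using gp by (simp add: field_simps power2_eq_square)
    have ka: "k*a = p*(g-1)/g"
    proof -
      have "k*a = (k*(1+g))* s^2 * (g-1)/g^2" unfolding ga2 by (simp add: algebra_simps)
      also have "... = p*(g-1)/g" unfolding kr using gp s by (simp add: field_simps power2_eq_square)
      finally show ?thesis .
    qed
    have "k^2 * a + 2*k*a + 2*k*p/g = (k*a) * k + 2 * (k*a) + 2*k*p/g" by (simp add: power2_eq_square algebra_simps)
    also have "... = (k*(1+g))*p/g + 2*p*(g-1)/g" unfolding ka using gp by (simp add: field_simps)
    also have "... = p^2/s^2 + 2*p - 2*p/g" unfolding kr using gp s by (simp add: field_simps power2_eq_square)
    finally have e1: "k^2 * a + 2*k*a + 2*k*p/g = p^2/s^2 + 2*p - 2*p/g" .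
    have "a + b/g^2 + k^2 * a + 2*p/g + 2*k*a + 2*k*p/g = a + b/g^2 + 2*p/g + (k^2 * a + 2*k*a + 2*k*p/g)" by simp
    also have "... = a + b/g^2 + p^2/s^2 + 2*p" unfolding e1 by simp
    also have "... = (1 + p/s^2)^2 * s^2 - s^2 * (1 - a/s^2) * (1 - b/s^2)"
      unfolding ga using gp s by (simp add: field_simps) (simp add: algebra_simps power2_eq_square power4_eq_xxxx)
    finally show ?thesis .
  qed
  have d2: "1 + p/s^2 \<noteq> 0" using d p_def by simp
  show ?thesis unfolding n key na p_def[symmetric] using d2
    by (simp add: field_simps)
qed
lemma inner_lt:
  assumes s: "s > 0" and X: "norm X < s" and Y: "norm Y < s"
  shows "\<bar>X \<bullet> Y\<bar> < s^2"
proof -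
  have "\<bar>X \<bullet> Y\<bar> \<le> norm X * norm Y" by (rule Cauchy_Schwarz_ineq2)
  also have "... < s * s" using X Y s by (intro mult_strict_mono) auto
  finally show ?thesis using s by (simp add: power2_eq_square)
qed

lemma one_minus_inner_pos:
  assumes s: "s > 0" and X: "norm X < s" and Y: "norm Y < s"
  shows "1 - (X \<bullet> Y)/s^2 > 0"
proof -
  have "X \<bullet> Y < s^2" using inner_lt[OF assms] by (simp add: abs_less_iff)
  hence "(X \<bullet> Y)/s^2 < 1" using s by (simp add: divide_less_eq)
  thus ?thesis by linarith
qed

lemma gd_sq:
  assumes s: "s > 0" and X: "norm X < s" and Y: "norm Y < s"
  shows "(norm (eplus s (-X) Y))^2 = s^2 - s^2 * (1 - (norm X)^2/s^2) * (1 - (norm Y)^2/s^2) / (1 - (X \<bullet> Y)/s^2)^2"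
proof -
  have "(-X) \<bullet> Y/s^2 = -((X \<bullet> Y)/s^2)" by simp
  hence "1 + ((-X) \<bullet> Y)/s^2 \<noteq> 0" using one_minus_inner_pos[OF assms] by linarith
  from eplus_norm[OF s _ this] X show ?thesis by simp
qed

lemma disc_pos:
  assumes s: "s > 0" and X: "norm X < s"
  shows "1 - (norm X)^2/s^2 > 0"
proof -
  have "(norm X)^2 < s^2" using X by (simp add: power_strict_mono)
  thus ?thesis using s by (simp add: field_simps)
qed

lemma gd_lt:
  assumes s: "s > 0" and X: "norm X < s" and Y: "norm Y < s"
  shows "norm (eplus s (-X) Y) < s"
proof -
  have "s^2 * (1 - (norm X)^2/s^2) * (1 - (norm Y)^2/s^2) / (1 - (X \<bullet> Y)/s^2)^2 > 0"
    using disc_pos[OF s X] disc_pos[OF s Y] one_minus_inner_pos[OF assms] s by simp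
  hence "(norm (eplus s (-X) Y))^2 < s^2" using gd_sq[OF assms] by linarith
  thus ?thesis using s by (smt (verit) power_mono norm_ge_zero)
qed

lemma egamma_gd:
  assumes s: "s > 0" and X: "norm X < s" and Y: "norm Y < s"
  shows "egamma s (eplus s (-X) Y) = egamma s X * egamma s Y * (1 - (X \<bullet> Y)/s^2)"
proof -
  define a where "a = 1 - (norm X)^2/s^2"
  define b where "b = 1 - (norm Y)^2/s^2"
  define p where "p = 1 - (X \<bullet> Y)/s^2"
  have a: "a > 0" and b: "b > 0" and p: "p > 0" using disc_pos[OF s X] disc_pos[OF s Y] one_minus_inner_pos[OF assms]
    by (auto simp: a_def b_def p_def)
  have sp: "s^2 - X \<bullet> Y > 0" using p s by (simp add: p_def field_simps)
  have n2: "(norm (eplus s (-X) Y))^2 = s^2 - s^2*a*b/p^2" unfolding gd_sq[OF assms] by (simp add: a_def b_def p_def)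
  have "1 - (norm (eplus s (-X) Y))^2/s^2 = a*b/p^2" unfolding n2 using s p
    by (simp add: field_simps)
  hence "egamma s (eplus s (-X) Y) = 1 / sqrt (a*b/p^2)" by (simp add: egamma_def)
  also have "... = (1/sqrt a) * (1/sqrt b) * p" using a b p by (simp add: real_sqrt_divide real_sqrt_mult)
  finally show ?thesis by (simp add: egamma_def a_def b_def p_def)
qed

lemma kfac:
  fixes g s :: real
  assumes "g > 0" "s > 0"
  shows "(1 / s\<^sup>2) * (g / (1 + g)) * (s^2 - s^2/g^2) = (g - 1)/g"
proof -
  have g2: "g^2 \<noteq> 0" using assms by simp
  have "s^2 * (g^2 - 1) / g^2 = s^2 * g^2 / g^2 - s^2 / g^2" by (simp add: right_diff_distrib diff_divide_distrib)
  also have "... = s^2 - s^2/g^2" using g2 by simp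
  finally have e1: "s^2 - s^2/g^2 = s^2 * (g^2 - 1) / g^2" by simp
  have "g^2 - 1 = (g-1) * (1+g)" by (simp add: algebra_simps power2_eq_square)
  hence "s^2 - s^2/g^2 = s^2 * (g-1) * (1+g) / g^2" unfolding e1 by simp
  hence "(1 / s\<^sup>2) * (g / (1 + g)) * (s^2 - s^2/g^2) = (1 / s\<^sup>2) * (g / (1 + g)) * (s^2 * (g-1) * (1+g) / g^2)" by simp
  also have "... = (g - 1)/g"
  proof -
    define w where "w = 1 + g"
    have w: "w > 0" "w \<noteq> 0" using assms unfolding w_def by auto
    have "(1 / s\<^sup>2) * (g / (1 + g)) * (s^2 * (g-1) * (1+g) / g^2) = (1 / s\<^sup>2) * (g / w) * (s^2 * (g-1) * w / g^2)"
      unfolding w_def by simp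
    also have "... = (g - 1)/g" using assms w by (simp add: field_simps power2_eq_square)
    finally show ?thesis .
  qed
  finally show ?thesis .
qed

definition Lmap :: "real \<Rightarrow> real^2 \<Rightarrow> real^2 \<Rightarrow> real^2" where
  "Lmap s a y = (1 / egamma s a) *\<^sub>R y + ((1 / s\<^sup>2) * (egamma s a / (1 + egamma s a)) * (a \<bullet> y)) *\<^sub>R a"

lemma Lmap_linear: "Lmap s a (c *\<^sub>R y + d *\<^sub>R z) = c *\<^sub>R Lmap s a y + d *\<^sub>R Lmap s a z"
  unfolding Lmap_def by (simp add: inner_add_right algebra_simps scaleR_add_right scaleR_add_left add_divide_distrib)

lemma eplus_affine:
  assumes s: "s > 0" and a: "norm a < s"
  shows "eplus s (-a) X = (1 / (1 - (a \<bullet> X)/s^2)) *\<^sub>R Lmap s a (X - a)"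
proof -
  define g where "g = egamma s a"
  have gp: "g > 0" and gr: "g^2 * (1 - (norm a)^2/s^2) = 1" using egamma_props[OF s a] g_def by auto
  have gm: "egamma s (-a) = g" by (simp add: egamma_def g_def)
  have z: "-a + (1/g) *\<^sub>R a + ((1 / s\<^sup>2) * (g / (1 + g)) * (a \<bullet> a)) *\<^sub>R a = 0"
  proof -
    have aa: "a \<bullet> a = s^2 - s^2/g^2" using gr gp s by (simp add: power2_norm_eq_inner[symmetric] field_simps)
    have "-1 + 1/g + (1 / s\<^sup>2) * (g / (1 + g)) * (a \<bullet> a) = 0"
      unfolding aa kfac[OF gp s] using gp by (simp add: field_simps)
    hence "(-1 + 1/g + (1 / s\<^sup>2) * (g / (1 + g)) * (a \<bullet> a)) *\<^sub>R a = 0" by simp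
    thus ?thesis by (simp add: algebra_simps scaleR_add_left)
  qed
  have "eplus s (-a) X = (1 / (1 - (a \<bullet> X)/s^2)) *\<^sub>R (-a + (1/g) *\<^sub>R X + ((1 / s\<^sup>2) * (g / (1 + g)) * (a \<bullet> X)) *\<^sub>R a)"
    unfolding eplus_def gm by (simp add: g_def)
  also have "-a + (1/g) *\<^sub>R X + ((1 / s\<^sup>2) * (g / (1 + g)) * (a \<bullet> X)) *\<^sub>R a = Lmap s a (X - a)"
  proof -
    have lin: "Lmap s a (X - a) = Lmap s a X - Lmap s a a" using Lmap_linear[of s a 1 X "-1" a] by simp
    have "Lmap s a (X - a) = ((1/g) *\<^sub>R X + ((1 / s\<^sup>2) * (g / (1 + g)) * (a \<bullet> X)) *\<^sub>R a)
        - ((1/g) *\<^sub>R a + ((1 / s\<^sup>2) * (g / (1 + g)) * (a \<bullet> a)) *\<^sub>R a)"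
      unfolding lin unfolding Lmap_def g_def[symmetric] by simp
    moreover have zb: "(1/g) *\<^sub>R a + ((1 / s\<^sup>2) * (g / (1 + g)) * (a \<bullet> a)) *\<^sub>R a = a"
    proof -
      have "(1/g) *\<^sub>R a + ((1 / s\<^sup>2) * (g / (1 + g)) * (a \<bullet> a)) *\<^sub>R a
          = a + (-a + (1/g) *\<^sub>R a + ((1 / s\<^sup>2) * (g / (1 + g)) * (a \<bullet> a)) *\<^sub>R a)" by simp
      also have "... = a" unfolding z by simp
      finally show ?thesis .
    qed
    ultimately show ?thesis by simp
  qed
  finally show ?thesis .
qed

lemma Lmap_inj:
  assumes s: "s > 0" and a: "norm a < s" and L: "Lmap s a y = 0"
  shows "y = 0"
proof -
  define g where "g = egamma s a"
  have gp: "g > 0" and gr: "g^2 * (1 - (norm a)^2/s^2) = 1" using egamma_props[OF s a] g_def by auto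
  define c where "c = (1 / s\<^sup>2) * (g / (1 + g)) * (a \<bullet> y)"
  have e: "(1/g) *\<^sub>R y + c *\<^sub>R a = 0" using L unfolding Lmap_def c_def g_def by simp
  hence y: "y = (- c * g) *\<^sub>R a" 
  proof -
    have "g *\<^sub>R ((1/g) *\<^sub>R y + c *\<^sub>R a) = 0" using e by simp
    hence "y + (g*c) *\<^sub>R a = 0" using gp by (simp add: scaleR_add_right)
    thus ?thesis by (simp add: algebra_simps eq_neg_iff_add_eq_0)
  qed
  have aa: "a \<bullet> a = s^2 - s^2/g^2" using gr gp s by (simp add: power2_norm_eq_inner[symmetric] field_simps)
  have "c = (1 / s\<^sup>2) * (g / (1 + g)) * (- c * g) * (a \<bullet> a)" unfolding c_def using y
    by (metis c_def inner_scaleR_right mult.assoc)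
  also have "... = - c * g * ((1 / s\<^sup>2) * (g / (1 + g)) * (a \<bullet> a))" by (simp add: algebra_simps)
  also have "... = - c * (g - 1)" unfolding aa kfac[OF gp s] using gp by (simp add: field_simps)
  finally have "c * g = 0" by (simp add: algebra_simps)
  hence "c = 0" using gp by simp
  thus ?thesis using y by simp
qed


lemma inner2: "(x::real^2) \<bullet> y = x$1 * y$1 + x$2 * y$2"
  by (simp add: inner_vec_def sum_2)

lemma vec2_eq: "(x::real^2) = y \<longleftrightarrow> x$1 = y$1 \<and> x$2 = y$2"
  by (simp add: vec_eq_iff forall_2)

lemma perp_exists: "\<exists>d::real^2. d \<noteq> 0 \<and> L \<bullet> d = 0"
proof (cases "L = 0")
  case True
  have "(vector [1, 0] :: real^2) $ 1 = 1" by simp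
  hence "(vector [1, 0] :: real^2) \<noteq> 0" by (metis zero_index zero_neq_one)
  thus ?thesis using True by (intro exI[of _ "vector [1, 0]"]) simp
next
  case False
  define d :: "real^2" where "d = vector [- L$2, L$1]"
  have d1: "d$1 = - L$2" and d2: "d$2 = L$1" by (simp_all add: d_def)
  have "d \<noteq> 0"
  proof
    assume "d = 0"
    hence "L$1 = 0" "L$2 = 0" using d1 d2 by (metis neg_equal_0_iff_equal zero_index)+
    hence "L = 0" by (simp add: vec2_eq)
    thus False using False by simp
  qed
  moreover have "L \<bullet> d = 0" unfolding inner2 d1 d2 by simp
  ultimately show ?thesis by blast
qed

lemma collinear2:
  fixes L u v :: "real^2"
  assumes L: "L \<noteq> 0" and u: "L \<bullet> u = 0" and v: "L \<bullet> v = 0" and u0: "u \<noteq> 0"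
  shows "\<exists>l. v = l *\<^sub>R u"
proof -
  define cr where "cr = u$1 * v$2 - u$2 * v$1"
  have u': "L$1 * u$1 + L$2 * u$2 = 0" and v': "L$1 * v$1 + L$2 * v$2 = 0" using u v by (simp_all only: inner2)
  have "L$1 * cr = (L$1 * u$1 + L$2 * u$2) * v$2 - (L$1 * v$1 + L$2 * v$2) * u$2" unfolding cr_def by (simp add: algebra_simps)
  hence c1: "L$1 * cr = 0" using u' v' by simp
  have "L$2 * cr = (L$2 * v$2 + L$1 * v$1) * u$1 - (L$2 * u$2 + L$1 * u$1) * v$1" unfolding cr_def by (simp add: algebra_simps)
  hence c2: "L$2 * cr = 0" using u' v' by (simp add: add.commute)
  have cr0: "cr = 0"
  proof (rule ccontr)
    assume "cr \<noteq> 0"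
    hence "L$1 = 0" "L$2 = 0" using c1 c2 by simp_all
    hence "L = 0" by (simp add: vec2_eq)
    thus False using L by simp
  qed
  define uu where "uu = u$1 * u$1 + u$2 * u$2"
  define uv where "uv = u$1 * v$1 + u$2 * v$2"
  have uu0: "uu \<noteq> 0"
  proof
    assume "uu = 0"
    hence "u$1 = 0 \<and> u$2 = 0" unfolding uu_def by (simp add: sum_squares_eq_zero_iff)
    hence "u = 0" by (simp add: vec2_eq)
    thus False using u0 by simp
  qed
  define l where "l = uv / uu"
  have "v$1 * uu - uv * u$1 = - u$2 * cr" unfolding uu_def uv_def cr_def by (simp add: algebra_simps)
  hence "v$1 * uu = uv * u$1" using cr0 by simp
  hence x1: "v$1 = l * u$1" using uu0 unfolding l_def by (simp add: field_simps)
  have "v$2 * uu - uv * u$2 = u$1 * cr" unfolding uu_def uv_def cr_def by (simp add: algebra_simps)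
  hence "v$2 * uu = uv * u$2" using cr0 by simp
  hence x2: "v$2 = l * u$2" using uu0 unfolding l_def by (simp add: field_simps)
  have "v = l *\<^sub>R u" unfolding vec2_eq using x1 x2 by simp
  thus ?thesis by blast
qed

definition Bq :: "real \<Rightarrow> real \<Rightarrow> real \<Rightarrow> real^2 \<Rightarrow> real \<Rightarrow> real^2 \<Rightarrow> real \<Rightarrow> real^2 \<Rightarrow> real" where
  "Bq k m s Oc x0 x y0 y = k * (x0 - (Oc \<bullet> x)/s^2) * (y0 - (Oc \<bullet> y)/s^2) - m * (x0*y0 - (x \<bullet> y)/s^2)"

lemma Bq_sym: "Bq k m s Oc x0 x y0 y = Bq k m s Oc y0 y x0 x"
  unfolding Bq_def by (simp add: inner_commute mult.commute mult.left_commute)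

lemma Bq_add1: "Bq k m s Oc (a0 + b0) (a + b) y0 y = Bq k m s Oc a0 a y0 y + Bq k m s Oc b0 b y0 y"
  unfolding Bq_def by (simp add: inner_add_right inner_add_left algebra_simps add_divide_distrib)

lemma Bq_scale1: "Bq k m s Oc (c * a0) (c *\<^sub>R a) y0 y = c * Bq k m s Oc a0 a y0 y"
  unfolding Bq_def by (simp add: algebra_simps)

lemma Bq_add2: "Bq k m s Oc y0 y (a0 + b0) (a + b) = Bq k m s Oc y0 y a0 a + Bq k m s Oc y0 y b0 b"
  using Bq_add1 Bq_sym by metis

lemma Bq_scale2: "Bq k m s Oc y0 y (c * a0) (c *\<^sub>R a) = c * Bq k m s Oc y0 y a0 a"
  using Bq_scale1 Bq_sym by metis

lemma Bq_line: "Bq k m s Oc 1 (X + t *\<^sub>R d) 1 (X + t *\<^sub>R d)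
   = Bq k m s Oc 1 X 1 X + 2 * t * Bq k m s Oc 1 X 0 d + t^2 * Bq k m s Oc 0 d 0 d"
proof -
  have e: "\<And>x0 x. Bq k m s Oc (1 + t * 0) (X + t *\<^sub>R d) x0 x = Bq k m s Oc 1 X x0 x + t * Bq k m s Oc 0 d x0 x"
    by (simp only: Bq_add1 Bq_scale1)
  have e2: "\<And>x0 x. Bq k m s Oc x0 x (1 + t * 0) (X + t *\<^sub>R d) = Bq k m s Oc x0 x 1 X + t * Bq k m s Oc x0 x 0 d"
    by (simp only: Bq_add2 Bq_scale2)
  have "Bq k m s Oc 1 (X + t *\<^sub>R d) 1 (X + t *\<^sub>R d) = Bq k m s Oc (1 + t * 0) (X + t *\<^sub>R d) (1 + t * 0) (X + t *\<^sub>R d)" by simp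
  also have "... = Bq k m s Oc 1 X 1 X + t * Bq k m s Oc 1 X 0 d + t * (Bq k m s Oc 0 d 1 X + t * Bq k m s Oc 0 d 0 d)"
    unfolding e e2 by (simp add: algebra_simps)
  also have "... = Bq k m s Oc 1 X 1 X + t * Bq k m s Oc 1 X 0 d + t * (Bq k m s Oc 1 X 0 d + t * Bq k m s Oc 0 d 0 d)"
    using Bq_sym[of k m s Oc 0 d 1 X] by simp
  finally show ?thesis by (simp add: algebra_simps power2_eq_square)
qed

lemma Bq_lin_pt: "Bq k m s Oc 1 (X + t *\<^sub>R d) y0 y = Bq k m s Oc 1 X y0 y + t * Bq k m s Oc 0 d y0 y"
proof -
  have "Bq k m s Oc (1 + t * 0) (X + t *\<^sub>R d) y0 y = Bq k m s Oc 1 X y0 y + t * Bq k m s Oc 0 d y0 y"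
    by (simp only: Bq_add1 Bq_scale1)
  thus ?thesis by simp
qed

lemma Bq_dir_pos:
  assumes "k \<ge> 0" "m > 0" "s > 0" "d \<noteq> 0"
  shows "Bq k m s Oc 0 d 0 d > 0"
proof -
  have "Bq k m s Oc 0 d 0 d = k * ((Oc \<bullet> d)/s^2)^2 + m * ((d \<bullet> d)/s^2)"
    unfolding Bq_def by (simp add: power2_eq_square)
  moreover have "(d \<bullet> d)/s^2 > 0" using assms by simp
  ultimately show ?thesis using assms by (simp add: add_nonneg_pos)
qed

lemma Bq_dir_nonneg:
  assumes "k \<ge> 0" "m > 0" "s > 0"
  shows "Bq k m s Oc 0 d 0 d \<ge> 0"
  using Bq_dir_pos[OF assms, of d Oc] by (cases "d = 0") (auto simp: Bq_def)

lemma Bq_diff: "Bq k m s Oc 1 T 0 (T - P) = Bq k m s Oc 1 T 1 T - Bq k m s Oc 1 T 1 P"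
proof -
  have "Bq k m s Oc 1 T (1 + (-1) * 1) (T + (-1) *\<^sub>R P) = Bq k m s Oc 1 T 1 T + (-1) * Bq k m s Oc 1 T 1 P"
    by (simp only: Bq_add2 Bq_scale2)
  thus ?thesis by simp
qed

lemma Bq_affine_P: "\<exists>L k0. (\<forall>T. Bq k m s Oc 1 T 1 P = k0 + L \<bullet> T) \<and> (\<forall>d. Bq k m s Oc 0 d 1 P = L \<bullet> d)"
proof -
  define L where "L = (m / s^2) *\<^sub>R P - (k * (1 - (Oc \<bullet> P)/s^2) / s^2) *\<^sub>R Oc"
  define k0 where "k0 = k * (1 - (Oc \<bullet> P)/s^2) - m"
  have "\<forall>T. Bq k m s Oc 1 T 1 P = k0 + L \<bullet> T"
    unfolding Bq_def L_def k0_def by (simp add: inner_diff_left inner_commute algebra_simps diff_divide_distrib)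
  moreover have "\<forall>d. Bq k m s Oc 0 d 1 P = L \<bullet> d"
    unfolding Bq_def L_def k0_def by (simp add: inner_diff_left inner_commute algebra_simps diff_divide_distrib)
  ultimately show ?thesis by blast
qed



lemma S_val:
  assumes QT: "Bq k m s Oc 1 T 1 T = 0" and BT: "Bq k m s Oc 1 T 1 P = 0"
  shows "Bq k m s Oc 1 P 1 P = Bq k m s Oc 0 (T - P) 0 (T - P)"
proof -
  have P: "P = T + (-1) *\<^sub>R (T - P)" by simp
  have "Bq k m s Oc 1 P 1 P = Bq k m s Oc 1 T 1 T + 2 * (-1) * Bq k m s Oc 1 T 0 (T - P) + (-1)^2 * Bq k m s Oc 0 (T - P) 0 (T - P)"
    by (subst P, subst P, rule Bq_line)
  also have "... = Bq k m s Oc 0 (T - P) 0 (T - P)" unfolding Bq_diff QT BT by simp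
  finally show ?thesis .
qed

lemma tangent_char:
  assumes k: "k \<ge> 0" and m: "m > 0" and s: "s > 0"
    and C: "C = {X. Bq k m s Oc 1 X 1 X = 0}" and Cd: "C \<subseteq> gdisc s"
  shows "tangency_point s C P T \<longleftrightarrow> Bq k m s Oc 1 T 1 T = 0 \<and> Bq k m s Oc 1 T 1 P = 0"
proof
  assume "tangency_point s C P T"
  then obtain d where d0: "d \<noteq> 0" and I: "gline s P d \<inter> C = {T}" unfolding tangency_point_def by blast
  have TC: "T \<in> C" using I by blast
  hence QT: "Bq k m s Oc 1 T 1 T = 0" using C by simp
  from I obtain t0 where t0: "T = P + t0 *\<^sub>R d" unfolding gline_def by blast
  have a: "Bq k m s Oc 0 d 0 d > 0" using Bq_dir_pos[OF k m s d0] .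
  have l0: "Bq k m s Oc 1 T 0 d = 0"
  proof (rule ccontr)
    assume l: "Bq k m s Oc 1 T 0 d \<noteq> 0"
    define u where "u = - 2 * Bq k m s Oc 1 T 0 d / Bq k m s Oc 0 d 0 d"
    have u0: "u \<noteq> 0" using l a unfolding u_def by simp
    define X where "X = T + u *\<^sub>R d"
    have "Bq k m s Oc 1 X 1 X = Bq k m s Oc 1 T 1 T + 2 * u * Bq k m s Oc 1 T 0 d + u^2 * Bq k m s Oc 0 d 0 d"
      unfolding X_def by (rule Bq_line)
    also have "... = 0" unfolding QT u_def using a by (simp add: power2_eq_square field_simps)
    finally have XC: "X \<in> C" using C by simp
    hence "X \<in> gdisc s" using Cd by blast
    moreover have "X = P + (t0 + u) *\<^sub>R d" unfolding X_def t0 by (simp add: scaleR_add_left)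
    ultimately have "X \<in> gline s P d" unfolding gline_def by blast
    hence "X = T" using XC I by blast
    hence "u *\<^sub>R d = 0" unfolding X_def by simp
    thus False using u0 d0 by simp
  qed
  have "Bq k m s Oc 1 T 1 P = 0"
  proof -
    have P: "P = T + (- t0) *\<^sub>R d" using t0 by simp
    have "Bq k m s Oc 1 T 1 P = Bq k m s Oc 1 P 1 T" by (rule Bq_sym)
    also have "... = Bq k m s Oc 1 T 1 T + (- t0) * Bq k m s Oc 0 d 1 T" by (subst P, rule Bq_lin_pt)
    also have "Bq k m s Oc 0 d 1 T = Bq k m s Oc 1 T 0 d" by (rule Bq_sym)
    finally show ?thesis using QT l0 by simp
  qed
  thus "Bq k m s Oc 1 T 1 T = 0 \<and> Bq k m s Oc 1 T 1 P = 0" using QT by simp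
next
  assume H: "Bq k m s Oc 1 T 1 T = 0 \<and> Bq k m s Oc 1 T 1 P = 0"
  hence QT: "Bq k m s Oc 1 T 1 T = 0" and BT: "Bq k m s Oc 1 T 1 P = 0" by auto
  have TC: "T \<in> C" using C QT by simp
  have Td: "T \<in> gdisc s" using TC Cd by blast
  \<comment> \<open>find a direction d through T along which the quadratic has a double root at T\<close>
  obtain d where d0: "d \<noteq> 0" and ld: "Bq k m s Oc 1 T 0 d = 0" and Pl: "\<exists>t. P = T + t *\<^sub>R d"
  proof (cases "T = P")
    case True
    obtain L k0 where L: "\<forall>X. Bq k m s Oc 1 X 1 T = k0 + L \<bullet> X" "\<forall>d. Bq k m s Oc 0 d 1 T = L \<bullet> d"
      using Bq_affine_P by blast
    obtain d :: "real^2" where "d \<noteq> 0" "L \<bullet> d = 0" using perp_exists by blast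
    moreover have "Bq k m s Oc 1 T 0 d = 0" using L(2) \<open>L \<bullet> d = 0\<close> Bq_sym by metis
    moreover have "P = T + 0 *\<^sub>R d" using True by simp
    ultimately show ?thesis using that by blast
  next
    case False
    have "T - P \<noteq> 0" using False by simp
    moreover have "Bq k m s Oc 1 T 0 (T - P) = 0" unfolding Bq_diff QT BT by simp
    moreover have "P = T + (-1) *\<^sub>R (T - P)" by simp
    ultimately show ?thesis using that by blast
  qed
  have a: "Bq k m s Oc 0 d 0 d > 0" using Bq_dir_pos[OF k m s d0] .
  from Pl obtain t1 where t1: "P = T + t1 *\<^sub>R d" by blast
  have "gline s P d \<inter> C = {T}"
  proof
    show "{T} \<subseteq> gline s P d \<inter> C"
    proof -
      have "T = P + (- t1) *\<^sub>R d" using t1 by simp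
      thus ?thesis using Td TC unfolding gline_def by blast
    qed
  next
    show "gline s P d \<inter> C \<subseteq> {T}"
    proof
      fix X assume X: "X \<in> gline s P d \<inter> C"
      then obtain t where t: "X = P + t *\<^sub>R d" unfolding gline_def by blast
      have X2: "X = T + (t1 + t) *\<^sub>R d" using t t1 by (simp add: scaleR_add_left)
      have "Bq k m s Oc 1 X 1 X = 0" using X C by simp
      moreover have "Bq k m s Oc 1 X 1 X = (t1 + t)^2 * Bq k m s Oc 0 d 0 d"
        unfolding X2 Bq_line QT ld by simp
      ultimately have "t1 + t = 0" using a by simp
      thus "X \<in> {T}" using X2 by simp
    qed
  qed
  thus "tangency_point s C P T" unfolding tangency_point_def using d0 by blast
qed

lemma S_neg:
  assumes k: "k \<ge> 0" and m: "m > 0" and s: "s > 0" and e: "Bq k m s Oc 1 P 1 P < 0"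
  shows "\<not> (Bq k m s Oc 1 T 1 T = 0 \<and> Bq k m s Oc 1 T 1 P = 0)"
  using S_val[of k m s Oc T P] Bq_dir_nonneg[OF k m s, of Oc "T - P"] e by auto

lemma S_zero:
  assumes k: "k \<ge> 0" and m: "m > 0" and s: "s > 0" and e: "Bq k m s Oc 1 P 1 P = 0"
  shows "(Bq k m s Oc 1 T 1 T = 0 \<and> Bq k m s Oc 1 T 1 P = 0) \<longleftrightarrow> T = P"
proof
  assume H: "Bq k m s Oc 1 T 1 T = 0 \<and> Bq k m s Oc 1 T 1 P = 0"
  hence "Bq k m s Oc 0 (T - P) 0 (T - P) = 0" using S_val[of k m s Oc T P] e by auto
  thus "T = P" using Bq_dir_pos[OF k m s, of "T - P" Oc] by (cases "T - P = 0") auto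
next
  assume "T = P" thus "Bq k m s Oc 1 T 1 T = 0 \<and> Bq k m s Oc 1 T 1 P = 0" using e by simp
qed

lemma S_L:
  assumes e: "Bq k m s Oc 1 P 1 P \<noteq> 0" and T: "Bq k m s Oc 1 T 1 P = 0"
  obtains L k0 where "L \<noteq> 0" "\<forall>X. Bq k m s Oc 1 X 1 P = k0 + L \<bullet> X" "\<forall>d. Bq k m s Oc 0 d 1 P = L \<bullet> d"
proof -
  obtain L k0 where L: "\<forall>X. Bq k m s Oc 1 X 1 P = k0 + L \<bullet> X" "\<forall>d. Bq k m s Oc 0 d 1 P = L \<bullet> d"
    using Bq_affine_P by blast
  have "L \<noteq> 0"
  proof
    assume L0: "L = 0"
    have "k0 = 0" using L(1) T L0 by simp
    hence "Bq k m s Oc 1 P 1 P = 0" using L(1) L0 by simp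
    thus False using e by simp
  qed
  thus ?thesis using that L by blast
qed

lemma S_three:
  assumes k: "k \<ge> 0" and m: "m > 0" and s: "s > 0" and e: "Bq k m s Oc 1 P 1 P > 0"
    and H1: "Bq k m s Oc 1 T1 1 T1 = 0" "Bq k m s Oc 1 T1 1 P = 0"
    and H2: "Bq k m s Oc 1 T2 1 T2 = 0" "Bq k m s Oc 1 T2 1 P = 0"
    and H3: "Bq k m s Oc 1 T3 1 T3 = 0" "Bq k m s Oc 1 T3 1 P = 0"
  shows "T1 = T2 \<or> T1 = T3 \<or> T2 = T3"
proof (rule ccontr)
  assume N: "\<not> (T1 = T2 \<or> T1 = T3 \<or> T2 = T3)"
  obtain L k0 where L0: "L \<noteq> 0" and L: "\<forall>X. Bq k m s Oc 1 X 1 P = k0 + L \<bullet> X" "\<forall>d. Bq k m s Oc 0 d 1 P = L \<bullet> d"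
    using S_L[of k m s Oc P T1] e H1(2) by auto
  define u where "u = T2 - T1"
  define v where "v = T3 - T1"
  have u0: "u \<noteq> 0" using N u_def by auto
  have "L \<bullet> u = 0" using L(1) H1 H2 unfolding u_def by (metis add_left_cancel diff_self inner_diff_right add_0_right)
  moreover have "L \<bullet> v = 0" using L(1) H1 H3 unfolding v_def by (metis add_left_cancel diff_self inner_diff_right add_0_right)
  ultimately obtain l where l: "v = l *\<^sub>R u" using collinear2[OF L0 _ _ u0] by blast
  have a: "Bq k m s Oc 0 u 0 u > 0" using Bq_dir_pos[OF k m s u0] .
  define b where "b = Bq k m s Oc 1 T1 0 u"
  have T2: "T2 = T1 + 1 *\<^sub>R u" unfolding u_def by simp
  have T3: "T3 = T1 + l *\<^sub>R u" using l unfolding v_def by (metis add.commute diff_add_cancel)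
  have "0 = 2 * b + Bq k m s Oc 0 u 0 u" using H2(1) Bq_line[of k m s Oc T1 1 u] H1(1) unfolding b_def T2[symmetric] by simp
  moreover have "0 = 2 * l * b + l^2 * Bq k m s Oc 0 u 0 u" using H3(1) Bq_line[of k m s Oc T1 l u] H1(1) unfolding b_def T3[symmetric] by simp
  ultimately have e1: "2 * b = - Bq k m s Oc 0 u 0 u" and e2: "2 * l * b + l^2 * Bq k m s Oc 0 u 0 u = 0" by linarith+
  have "2 * l * b = l * (2 * b)" by simp
  hence "2 * l * b = - l * Bq k m s Oc 0 u 0 u" unfolding e1 by simp
  hence "l^2 * Bq k m s Oc 0 u 0 u - l * Bq k m s Oc 0 u 0 u = 0" using e2 by linarith
  hence "l * (l - 1) * Bq k m s Oc 0 u 0 u = 0" by (simp add: algebra_simps power2_eq_square)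
  hence "l = 0 \<or> l = 1" using a by simp
  thus False using N T2 T3 by auto
qed

lemma S_two:
  assumes k: "k \<ge> 0" and m: "m > 0" and s: "s > 0" and e: "Bq k m s Oc 1 P 1 P > 0"
    and Z: "Bq k m s Oc 1 Z 1 Z < 0"
  shows "\<exists>T1 T2. T1 \<noteq> T2 \<and> Bq k m s Oc 1 T1 1 T1 = 0 \<and> Bq k m s Oc 1 T1 1 P = 0
     \<and> Bq k m s Oc 1 T2 1 T2 = 0 \<and> Bq k m s Oc 1 T2 1 P = 0"
proof -
  define ee where "ee = Bq k m s Oc 1 P 1 P"
  define b where "b = Bq k m s Oc 1 Z 1 P"
  have bs: "Bq k m s Oc 1 P 1 Z = b" unfolding b_def by (rule Bq_sym)
  define y0 where "y0 = ee * 1 + (-b) * 1"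
  define y where "y = ee *\<^sub>R Z + (-b) *\<^sub>R P"
  have lin: "\<And>w0 w. Bq k m s Oc y0 y w0 w = ee * Bq k m s Oc 1 Z w0 w + (-b) * Bq k m s Oc 1 P w0 w"
    unfolding y0_def y_def by (simp only: Bq_add1 Bq_scale1)
  have lin2: "\<And>w0 w. Bq k m s Oc w0 w y0 y = ee * Bq k m s Oc w0 w 1 Z + (-b) * Bq k m s Oc w0 w 1 P"
    unfolding y0_def y_def by (simp only: Bq_add2 Bq_scale2)
  have QY: "Bq k m s Oc y0 y y0 y = ee * (ee * Bq k m s Oc 1 Z 1 Z - b^2)"
    unfolding lin lin2 bs b_def[symmetric] ee_def[symmetric] by (simp add: algebra_simps power2_eq_square)
  have QYn: "Bq k m s Oc y0 y y0 y < 0"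
  proof -
    have "ee * Bq k m s Oc 1 Z 1 Z < 0" using e Z unfolding ee_def by (rule mult_pos_neg)
    moreover have "b^2 \<ge> 0" by simp
    ultimately have "ee * Bq k m s Oc 1 Z 1 Z - b^2 < 0" by linarith
    thus ?thesis unfolding QY using e ee_def mult_pos_neg by blast
  qed
  have BY: "Bq k m s Oc y0 y 1 P = 0" unfolding lin b_def[symmetric] ee_def[symmetric] by simp
  have y00: "y0 \<noteq> 0"
  proof
    assume "y0 = 0"
    hence "Bq k m s Oc y0 y y0 y \<ge> 0" using Bq_dir_nonneg[OF k m s, of Oc y] by simp
    thus False using QYn by simp
  qed
  define Y where "Y = (1/y0) *\<^sub>R y"
  have Yh: "1 = (1/y0) * y0" using y00 by simp
  have QYa: "Bq k m s Oc 1 Y 1 Y = (1/y0) * ((1/y0) * Bq k m s Oc y0 y y0 y)"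
    unfolding Y_def by (subst (1 2) Yh, simp only: Bq_scale1 Bq_scale2)
  have QYneg: "Bq k m s Oc 1 Y 1 Y < 0"
  proof -
    have "(1/y0) * ((1/y0) * Bq k m s Oc y0 y y0 y) = Bq k m s Oc y0 y y0 y / y0^2" by (simp add: power2_eq_square)
    moreover have "y0^2 > 0" using y00 by simp
    ultimately show ?thesis unfolding QYa using QYn by (simp add: divide_neg_pos)
  qed
  have BYa: "Bq k m s Oc 1 Y 1 P = 0"
  proof -
    have "Bq k m s Oc 1 Y 1 P = (1/y0) * Bq k m s Oc y0 y 1 P"
      unfolding Y_def by (subst Yh, simp only: Bq_scale1)
    thus ?thesis using BY by simp
  qed
  obtain L k0 where L: "\<forall>X. Bq k m s Oc 1 X 1 P = k0 + L \<bullet> X" "\<forall>d. Bq k m s Oc 0 d 1 P = L \<bullet> d"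
    using Bq_affine_P by blast
  obtain d :: "real^2" where d0: "d \<noteq> 0" and Ld: "L \<bullet> d = 0" using perp_exists by blast
  have dP: "Bq k m s Oc 0 d 1 P = 0" using L(2) Ld by simp
  define a where "a = Bq k m s Oc 0 d 0 d"
  have a: "a > 0" unfolding a_def using Bq_dir_pos[OF k m s d0] .
  define \<beta> where "\<beta> = Bq k m s Oc 1 Y 0 d"
  define q where "q = Bq k m s Oc 1 Y 1 Y"
  define r where "r = sqrt (\<beta>^2 - a * q)"
  have "a * q < 0" using a QYneg unfolding q_def by (rule mult_pos_neg)
  moreover have "\<beta>^2 \<ge> 0" by simp
  ultimately have disc: "\<beta>^2 - a * q > 0" by linarith
  have r: "r > 0" "r^2 = \<beta>^2 - a * q" using disc unfolding r_def by auto
  define tp where "tp = (- \<beta> + r)/a"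
  define tm where "tm = (- \<beta> - r)/a"
  have root: "\<And>t. t = tp \<or> t = tm \<Longrightarrow> Bq k m s Oc 1 (Y + t *\<^sub>R d) 1 (Y + t *\<^sub>R d) = 0"
  proof -
    fix t assume t: "t = tp \<or> t = tm"
    have "Bq k m s Oc 1 (Y + t *\<^sub>R d) 1 (Y + t *\<^sub>R d) = q + 2 * t * \<beta> + t^2 * a"
      unfolding q_def \<beta>_def a_def by (rule Bq_line)
    also have "... = 0"
    proof -
      have "a * (q + 2 * t * \<beta> + t^2 * a) = (a*t + \<beta>)^2 - (\<beta>^2 - a * q)" by (simp add: algebra_simps power2_eq_square)
      also have "(a*t + \<beta>)^2 = r^2"
      proof -
        have "a*t + \<beta> = r \<or> a*t + \<beta> = - r" using t a unfolding tp_def tm_def by auto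
        thus ?thesis by (auto simp: power2_eq_square)
      qed
      finally have "a * (q + 2 * t * \<beta> + t^2 * a) = 0" using r(2) by simp
      thus ?thesis using a by simp
    qed
    finally show "Bq k m s Oc 1 (Y + t *\<^sub>R d) 1 (Y + t *\<^sub>R d) = 0" .
  qed
  have onP: "\<And>t. Bq k m s Oc 1 (Y + t *\<^sub>R d) 1 P = 0"
    using Bq_lin_pt[of k m s Oc Y _ d 1 P] BYa dP by simp
  have ne: "Y + tp *\<^sub>R d \<noteq> Y + tm *\<^sub>R d"
  proof
    assume "Y + tp *\<^sub>R d = Y + tm *\<^sub>R d"
    hence "(tp - tm) *\<^sub>R d = 0" by (simp add: scaleR_diff_left)
    moreover have "tp - tm = 2 * r / a" unfolding tp_def tm_def using a by (simp add: field_simps)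
    ultimately show False using r a d0 by simp
  qed
  show ?thesis using ne root onP by blast
qed



lemma bil:
  fixes A1 A2 A3 Oc :: "real^2"
  assumes s: "s > 0"
    and t1: "c1 * (1 - (Oc \<bullet> A1)/s^2) = \<beta>" and t2: "c2 * (1 - (Oc \<bullet> A2)/s^2) = \<beta>" and t3: "c3 * (1 - (Oc \<bullet> A3)/s^2) = \<beta>"
    and h12: "c1 * c2 * (1 - (A1 \<bullet> A2)/s^2) = g12" and h13: "c1 * c3 * (1 - (A1 \<bullet> A3)/s^2) = g13"
    and h23: "c2 * c3 * (1 - (A2 \<bullet> A3)/s^2) = g23"
    and h11: "c1 * c1 * (1 - (A1 \<bullet> A1)/s^2) = 1" and h22: "c2 * c2 * (1 - (A2 \<bullet> A2)/s^2) = 1"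
    and h33: "c3 * c3 * (1 - (A3 \<bullet> A3)/s^2) = 1"
    and kb: "k * \<beta>^2 = m"
  shows "Bq k m s Oc (n1*c1 + n2*c2 + n3*c3) ((n1*c1) *\<^sub>R A1 + (n2*c2) *\<^sub>R A2 + (n3*c3) *\<^sub>R A3)
                     (p1*c1 + p2*c2 + p3*c3) ((p1*c1) *\<^sub>R A1 + (p2*c2) *\<^sub>R A2 + (p3*c3) *\<^sub>R A3)
   = - m * (n1*p2*(g12-1) + n2*p1*(g12-1) + n1*p3*(g13-1) + n3*p1*(g13-1) + n2*p3*(g23-1) + n3*p2*(g23-1))"
proof -
  have L1: "\<And>n1 n2 n3. (n1*c1 + n2*c2 + n3*c3) - (Oc \<bullet> ((n1*c1) *\<^sub>R A1 + (n2*c2) *\<^sub>R A2 + (n3*c3) *\<^sub>R A3))/s^2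
      = n1 * (c1 * (1 - (Oc \<bullet> A1)/s^2)) + n2 * (c2 * (1 - (Oc \<bullet> A2)/s^2)) + n3 * (c3 * (1 - (Oc \<bullet> A3)/s^2))"
    using s by (simp add: inner_add_right field_simps)
  have L2: "(n1*c1 + n2*c2 + n3*c3) * (p1*c1 + p2*c2 + p3*c3)
      - (((n1*c1) *\<^sub>R A1 + (n2*c2) *\<^sub>R A2 + (n3*c3) *\<^sub>R A3) \<bullet> ((p1*c1) *\<^sub>R A1 + (p2*c2) *\<^sub>R A2 + (p3*c3) *\<^sub>R A3))/s^2
     = n1*p1*(c1 * c1 * (1 - (A1 \<bullet> A1)/s^2)) + n2*p2*(c2 * c2 * (1 - (A2 \<bullet> A2)/s^2)) + n3*p3*(c3 * c3 * (1 - (A3 \<bullet> A3)/s^2))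
       + (n1*p2 + n2*p1)*(c1 * c2 * (1 - (A1 \<bullet> A2)/s^2)) + (n1*p3 + n3*p1)*(c1 * c3 * (1 - (A1 \<bullet> A3)/s^2))
       + (n2*p3 + n3*p2)*(c2 * c3 * (1 - (A2 \<bullet> A3)/s^2))"
    using s by (simp add: inner_add_left inner_add_right inner_commute field_simps)
  have "Bq k m s Oc (n1*c1 + n2*c2 + n3*c3) ((n1*c1) *\<^sub>R A1 + (n2*c2) *\<^sub>R A2 + (n3*c3) *\<^sub>R A3)
                     (p1*c1 + p2*c2 + p3*c3) ((p1*c1) *\<^sub>R A1 + (p2*c2) *\<^sub>R A2 + (p3*c3) *\<^sub>R A3)
     = k * (\<beta> * (n1+n2+n3)) * (\<beta> * (p1+p2+p3)) - m * (n1*p1 + n2*p2 + n3*p3 + (n1*p2 + n2*p1)*g12 + (n1*p3 + n3*p1)*g13 + (n2*p3 + n3*p2)*g23)"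
    unfolding Bq_def L1 L2 t1 t2 t3 h11 h22 h33 h12 h13 h23 by (simp add: algebra_simps)
  also have "... = (k * \<beta>^2) * (n1+n2+n3) * (p1+p2+p3) - m * (n1*p1 + n2*p2 + n3*p3 + (n1*p2 + n2*p1)*g12 + (n1*p3 + n3*p1)*g13 + (n2*p3 + n3*p2)*g23)"
    by (simp add: power2_eq_square algebra_simps)
  also have "... = - m * (n1*p2*(g12-1) + n2*p1*(g12-1) + n1*p3*(g13-1) + n3*p1*(g13-1) + n2*p3*(g23-1) + n3*p2*(g23-1))"
    unfolding kb by (simp add: algebra_simps)
  finally show ?thesis .
qed

lemma gbary_scale:
  assumes "c \<noteq> 0"
  shows "gbary s A1 A2 A3 (c*n1) (c*n2) (c*n3) = gbary s A1 A2 A3 n1 n2 n3"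
proof -
  have "(c*n1) * egamma s A1 + (c*n2) * egamma s A2 + (c*n3) * egamma s A3 = c * (n1 * egamma s A1 + n2 * egamma s A2 + n3 * egamma s A3)"
    by (simp add: algebra_simps)
  moreover have "((c*n1) * egamma s A1) *\<^sub>R A1 + ((c*n2) * egamma s A2) *\<^sub>R A2 + ((c*n3) * egamma s A3) *\<^sub>R A3
     = c *\<^sub>R ((n1 * egamma s A1) *\<^sub>R A1 + (n2 * egamma s A2) *\<^sub>R A2 + (n3 * egamma s A3) *\<^sub>R A3)"
    by (simp add: scaleR_add_right mult.assoc)
  ultimately show ?thesis unfolding gbary_def using assms by simp
qed

lemma gbary_Bq:
  assumes W: "n1*c1 + n2*c2 + n3*c3 \<noteq> 0" and Wp: "p1*c1 + p2*c2 + p3*c3 \<noteq> 0"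
    and c: "egamma s A1 = c1" "egamma s A2 = c2" "egamma s A3 = c3"
  shows "Bq k m s Oc 1 (gbary s A1 A2 A3 n1 n2 n3) 1 (gbary s A1 A2 A3 p1 p2 p3)
   = (1/(n1*c1 + n2*c2 + n3*c3)) * (1/(p1*c1 + p2*c2 + p3*c3)) *
     Bq k m s Oc (n1*c1 + n2*c2 + n3*c3) ((n1*c1) *\<^sub>R A1 + (n2*c2) *\<^sub>R A2 + (n3*c3) *\<^sub>R A3)
                 (p1*c1 + p2*c2 + p3*c3) ((p1*c1) *\<^sub>R A1 + (p2*c2) *\<^sub>R A2 + (p3*c3) *\<^sub>R A3)"
proof -
  define Wn where "Wn = n1*c1 + n2*c2 + n3*c3"
  define Wq where "Wq = p1*c1 + p2*c2 + p3*c3"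
  define Vn where "Vn = (n1*c1) *\<^sub>R A1 + (n2*c2) *\<^sub>R A2 + (n3*c3) *\<^sub>R A3"
  define Vq where "Vq = (p1*c1) *\<^sub>R A1 + (p2*c2) *\<^sub>R A2 + (p3*c3) *\<^sub>R A3"
  have g1: "gbary s A1 A2 A3 n1 n2 n3 = (1/Wn) *\<^sub>R Vn" unfolding gbary_def c Wn_def Vn_def by simp
  have g2: "gbary s A1 A2 A3 p1 p2 p3 = (1/Wq) *\<^sub>R Vq" unfolding gbary_def c Wq_def Vq_def by simp
  have e1: "(1::real) = (1/Wn) * Wn" using W Wn_def by simp
  have e2: "(1::real) = (1/Wq) * Wq" using Wp Wq_def by simp
  have "Bq k m s Oc 1 ((1/Wn) *\<^sub>R Vn) 1 ((1/Wq) *\<^sub>R Vq) = Bq k m s Oc ((1/Wn) * Wn) ((1/Wn) *\<^sub>R Vn) ((1/Wq) * Wq) ((1/Wq) *\<^sub>R Vq)"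
    using e1 e2 by simp
  also have "... = (1/Wq) * ((1/Wn) * Bq k m s Oc Wn Vn Wq Vq)" by (simp only: Bq_scale1 Bq_scale2)
  finally show ?thesis unfolding g1 g2 Wn_def[symmetric] Wq_def[symmetric] Vn_def[symmetric] Vq_def[symmetric] by (metis mult.assoc mult.commute)
qed



lemma affind:
  assumes s: "s > 0" and A: "norm A1 < s" "norm A2 < s" "norm A3 < s"
    and indep: "gyrobary_indep s A1 A2 A3"
    and w: "w1 + w2 + w3 = 0" "w1 *\<^sub>R A1 + w2 *\<^sub>R A2 + w3 *\<^sub>R A3 = 0"
  shows "w1 = 0 \<and> w2 = 0 \<and> w3 = 0"
proof -
  define a2 where "a2 = 1 - (A1 \<bullet> A2)/s^2"
  define a3 where "a3 = 1 - (A1 \<bullet> A3)/s^2"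
  have a2: "a2 > 0" and a3: "a3 > 0" using one_minus_inner_pos[OF s A(1) A(2)] one_minus_inner_pos[OF s A(1) A(3)]
    unfolding a2_def a3_def by auto
  have u: "eplus s (- A1) A2 = (1/a2) *\<^sub>R Lmap s A1 (A2 - A1)" using eplus_affine[OF s A(1)] a2_def by simp
  have v: "eplus s (- A1) A3 = (1/a3) *\<^sub>R Lmap s A1 (A3 - A1)" using eplus_affine[OF s A(1)] a3_def by simp
  have w1: "w1 = - w2 - w3" using w(1) by simp
  have z: "w2 *\<^sub>R (A2 - A1) + w3 *\<^sub>R (A3 - A1) = 0"
    using w(2) unfolding w1 by (simp add: algebra_simps scaleR_diff_left scaleR_diff_right)
  have "(w2 * a2) *\<^sub>R eplus s (- A1) A2 + (w3 * a3) *\<^sub>R eplus s (- A1) A3 = Lmap s A1 (w2 *\<^sub>R (A2 - A1) + w3 *\<^sub>R (A3 - A1))"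
    unfolding u v Lmap_linear using a2 a3 by simp
  also have "... = 0" unfolding z using Lmap_linear[of s A1 0 0 0 0] by simp
  finally have "w2 * a2 = 0 \<and> w3 * a3 = 0" using indep unfolding gyrobary_indep_def by blast
  hence "w2 = 0" "w3 = 0" using a2 a3 by auto
  thus ?thesis using w1 by simp
qed

lemma gamma_gt1:
  assumes s: "s > 0" and a: "norm a < s" and X: "norm X < s" and ne: "X \<noteq> a"
  shows "egamma s (eplus s (- a) X) > 1"
proof -
  define v where "v = eplus s (- a) X"
  have p: "1 - (a \<bullet> X)/s^2 > 0" using one_minus_inner_pos[OF s a X] .
  have "v = (1 / (1 - (a \<bullet> X)/s^2)) *\<^sub>R Lmap s a (X - a)" unfolding v_def by (rule eplus_affine[OF s a])
  moreover have "Lmap s a (X - a) \<noteq> 0" using Lmap_inj[OF s a] ne by force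
  moreover have c0: "(1 / (1 - (a \<bullet> X)/s^2)) \<noteq> 0"
  proof -
    have "(1 / (1 - (a \<bullet> X)/s^2)) > 0" using p by simp
    thus ?thesis by linarith
  qed
  ultimately have v0: "v \<noteq> 0" by (metis scaleR_eq_0_iff)
  have vl: "norm v < s" unfolding v_def by (rule gd_lt[OF s a X])
  have q: "1 - (norm v)^2/s^2 > 0" by (rule disc_pos[OF s vl])
  have "(norm v)^2 > 0" using v0 by simp
  hence q1: "1 - (norm v)^2/s^2 < 1" using s by simp
  have "sqrt (1 - (norm v)^2/s^2) < sqrt 1" using q1 by (simp only: real_sqrt_less_iff)
  hence "sqrt (1 - (norm v)^2/s^2) < 1" by simp
  moreover have "sqrt (1 - (norm v)^2/s^2) > 0" using q by simp
  ultimately have "1 / sqrt (1 - (norm v)^2/s^2) > 1" by (simp add: less_divide_eq)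
  thus ?thesis unfolding v_def[symmetric] egamma_def .
qed

lemma circ_rel:
  assumes s: "s > 0" and O: "norm Oc < s" and X: "norm X < s"
  shows "(gyrodist s Oc X)^2 - R^2 = s^2 * Bq (1 - R^2/s^2) (1 - (norm Oc)^2/s^2) s Oc 1 X 1 X / (1 - (Oc \<bullet> X)/s^2)^2"
proof -
  define t where "t = 1 - (Oc \<bullet> X)/s^2"
  define b where "b = 1 - (norm X)^2/s^2"
  define \<kappa> where "\<kappa> = 1 - R^2/s^2"
  define \<mu> where "\<mu> = 1 - (norm Oc)^2/s^2"
  have t0: "t \<noteq> 0" using one_minus_inner_pos[OF s O X] unfolding t_def by linarith
  have n: "(norm X)^2 = X \<bullet> X" by (simp add: power2_norm_eq_inner)
  have B: "Bq \<kappa> \<mu> s Oc 1 X 1 X = \<kappa> * t^2 - \<mu> * b" unfolding Bq_def t_def b_def n by (simp add: power2_eq_square)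
  have g: "(gyrodist s Oc X)^2 = s^2 - s^2 * \<mu> * b / t^2" unfolding gyrodist_def gd_sq[OF s O X] t_def b_def \<mu>_def by simp
  have R: "R^2 = s^2 - s^2 * \<kappa>" unfolding \<kappa>_def using s by (simp add: field_simps)
  have "(gyrodist s Oc X)^2 - R^2 = s^2 * (\<kappa> * t^2 - \<mu> * b) / t^2" unfolding g R using t0 by (simp add: field_simps)
  hence "(gyrodist s Oc X)^2 - R^2 = s^2 * Bq \<kappa> \<mu> s Oc 1 X 1 X / t^2" unfolding B .
  thus ?thesis unfolding \<kappa>_def \<mu>_def t_def .
qed

lemma Qzero_disc:
  assumes s: "s > 0" and O: "norm Oc < s" and k: "k > 0" and m: "m > 0"
    and Q: "Bq k m s Oc 1 X 1 X = 0"
  shows "norm X < s"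
proof (rule ccontr)
  assume "\<not> norm X < s"
  hence Xs: "norm X \<ge> s" by simp
  hence "(norm X)^2 \<ge> s^2" using s by (simp add: power_mono)
  hence h1: "1 - (X \<bullet> X)/s^2 \<le> 0" using s by (simp add: power2_norm_eq_inner field_simps)
  have "Bq k m s Oc 1 X 1 X = k * (1 - (Oc \<bullet> X)/s^2)^2 - m * (1 - (X \<bullet> X)/s^2)"
    unfolding Bq_def by (simp add: power2_eq_square)
  hence e: "k * (1 - (Oc \<bullet> X)/s^2)^2 = m * (1 - (X \<bullet> X)/s^2)" using Q by simp
  have "k * (1 - (Oc \<bullet> X)/s^2)^2 \<ge> 0" using k by simp
  moreover have "m * (1 - (X \<bullet> X)/s^2) \<le> 0" using m h1 by (simp add: mult_nonneg_nonpos)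
  ultimately have "k * (1 - (Oc \<bullet> X)/s^2)^2 = 0" "m * (1 - (X \<bullet> X)/s^2) = 0" using e by linarith+
  hence "Oc \<bullet> X = s^2" "X \<bullet> X = s^2" using k m s by auto
  hence nX: "norm X = s" using s by (metis norm_eq_sqrt_inner real_sqrt_abs abs_of_pos power2_eq_square real_sqrt_mult_self)
  have "\<bar>Oc \<bullet> X\<bar> \<le> norm Oc * norm X" by (rule Cauchy_Schwarz_ineq2)
  also have "... < s * s" using O nX s by simp
  finally show False using \<open>Oc \<bullet> X = s^2\<close> by (simp add: power2_eq_square)
qed

lemma alg_phi:
  fixes x y z m1 m2 m3 r \<sigma> :: real
  assumes "r^2 = - (m1*m2*x + m1*m3*y + m2*m3*z) * (x*y*z)" "\<sigma>^2 = 1"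
  shows "let F0 = m1*x+m3*z; F1 = m1*x*y + \<sigma>*r; F2 = -m3*y*z + \<sigma>*r;
     n1 = F0*F1*z; n2 = F1*F2; n3 = -F0*F2*x in
   n1*m2*x + n2*m1*x + n1*m3*y + n3*m1*y + n2*m3*z + n3*m2*z = 0"
  using assms unfolding Let_def by algebra

lemma alg_D1:
  fixes x y z m1 m2 m3 r \<sigma> :: real
  shows "let F0 = m1*x+m3*z; F1 = m1*x*y + \<sigma>*r; F2 = -m3*y*z + \<sigma>*r;
     n1 = F0*F1*z; n2 = F1*F2; n3 = -F0*F2*x in
   n1*n2*x + n1*n3*y + n2*n3*z = 0"
proof -
  define F0 where "F0 = m1*x+m3*z"
  define F1 where "F1 = m1*x*y + \<sigma>*r"
  define F2 where "F2 = -m3*y*z + \<sigma>*r"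
  have d: "F1 - F2 = y * F0" unfolding F0_def F1_def F2_def by (simp add: algebra_simps)
  have "(F0*F1*z)*(F1*F2)*x + (F0*F1*z)*(-F0*F2*x)*y + (F1*F2)*(-F0*F2*x)*z = F0*F1*F2*x*z*((F1 - F2) - y*F0)"
    by (simp add: algebra_simps)
  also have "... = 0" unfolding d by simp
  finally show ?thesis unfolding Let_def F0_def[symmetric] F1_def[symmetric] F2_def[symmetric] .
qed

lemma alg_sum:
  fixes x y z m1 m2 m3 r \<sigma> :: real
  assumes "r^2 = - (m1*m2*x + m1*m3*y + m2*m3*z) * (x*y*z)" "\<sigma>^2 = 1"
  shows "let F0 = m1*x+m3*z; F1 = m1*x*y + \<sigma>*r; F2 = -m3*y*z + \<sigma>*r;
     n1 = F0*F1*z; n2 = F1*F2; n3 = -F0*F2*x;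
     E1 = (m1 - m2 + m3) * (m1 * x + m3 * z) - 2 * m1 * m3 * y;
     E2 = - m1 * x^2 + m3 * z^2 + m1 * x * y - m3 * y*z + (m1 - m3) * x*z in
   n1+n2+n3 = x*y*z*E1 + \<sigma>*r*E2"
  using assms unfolding Let_def by algebra



lemma dist_alg:
  fixes x y z m1 m2 m3 r c1 c2 c3 F0 F1p F1m F2p F2m :: real
  assumes x: "x > 0" and y: "y > 0" and z: "z > 0" and r: "r > 0"
    and rr: "r^2 = - (m1*m2*x + m1*m3*y + m2*m3*z) * (x*y*z)"
    and F0: "F0 = m1*x + m3*z" and F1p: "F1p = m1*x*y + r" and F1m: "F1m = m1*x*y + (-1)*r"
    and F2p: "F2p = - m3*y*z + r" and F2m: "F2m = - m3*y*z + (-1)*r"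
    and Wa: "(F0*F1p*z)*c1 + (F1p*F2p)*c2 + (- F0*F2p*x)*c3 \<noteq> 0"
    and Wb: "(F0*F1m*z)*c1 + (F1m*F2m)*c2 + (- F0*F2m*x)*c3 \<noteq> 0"
    and e1: "(F0*F1p*z) * ((F0*F1m*z)*c1 + (F1m*F2m)*c2 + (- F0*F2m*x)*c3) = (F0*F1m*z) * ((F0*F1p*z)*c1 + (F1p*F2p)*c2 + (- F0*F2p*x)*c3)"
    and e2: "(F1p*F2p) * ((F0*F1m*z)*c1 + (F1m*F2m)*c2 + (- F0*F2m*x)*c3) = (F1m*F2m) * ((F0*F1p*z)*c1 + (F1p*F2p)*c2 + (- F0*F2p*x)*c3)"
    and e3: "(- F0*F2p*x) * ((F0*F1m*z)*c1 + (F1m*F2m)*c2 + (- F0*F2m*x)*c3) = (- F0*F2m*x) * ((F0*F1p*z)*c1 + (F1p*F2p)*c2 + (- F0*F2p*x)*c3)"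
  shows False
proof -
  define A where "A = (F0*F1p*z)*c1 + (F1p*F2p)*c2 + (- F0*F2p*x)*c3"
  define B where "B = (F0*F1m*z)*c1 + (F1m*F2m)*c2 + (- F0*F2m*x)*c3"
  have A0: "A \<noteq> 0" and B0: "B \<noteq> 0" using Wa Wb A_def B_def by auto
  have d1: "F1p - F1m = 2*r" and d2: "F2p - F2m = 2*r" using F1p F1m F2p F2m by simp_all
  show False
  proof (cases "F0 = 0")
    case True
    have m3z: "m3*z = - (m1*x)" using True F0 by simp
    have "r^2 = - (m2*(m1*x + m3*z) + m1*m3*y) * (x*y*z)" using rr by (simp add: algebra_simps)
    also have "... = - (m1*x) * (m3*z) * y^2" using True F0 by (simp add: power2_eq_square algebra_simps)
    also have "... = (m1*x*y)^2" unfolding m3z by (simp add: power2_eq_square algebra_simps)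
    finally have "r^2 = (m1*x*y)^2" .
    hence "r = m1*x*y \<or> r = - (m1*x*y)" by (metis power2_eq_iff)
    hence "F1m = 0 \<or> F1p = 0" using F1p F1m by auto
    thus False using A0 B0 True unfolding A_def B_def by auto
  next
    case False
    have l1: "F1p * B = F1m * A" using e1 False z unfolding A_def[symmetric] B_def[symmetric] by simp
    have l3: "F2p * B = F2m * A" using e3 False x unfolding A_def[symmetric] B_def[symmetric] by simp
    have l2: "(F1p*F2p) * B = (F1m*F2m) * A" using e2 unfolding A_def[symmetric] B_def[symmetric] .
    have "(F1p*F2p) * B * B = (F1m*A) * (F2m*A)" using l1 l3 by (metis mult.assoc mult.commute)
    hence "(F1m*F2m) * A * B = (F1m*F2m) * A * A" using l2 by (simp add: algebra_simps)
    hence "F1m*F2m*A*(B - A) = 0" by (simp add: algebra_simps)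
    hence c: "F1m = 0 \<or> F2m = 0 \<or> B = A" using A0 by auto
    show False
    proof -
      { assume "F1m = 0"
        hence "F1p = 0" using l1 B0 by simp
        hence False using d1 r \<open>F1m = 0\<close> by simp }
      moreover
      { assume "F2m = 0"
        hence "F2p = 0" using l3 B0 by simp
        hence False using d2 r \<open>F2m = 0\<close> by simp }
      moreover
      { assume "B = A"
        hence "F1p = F1m" using l1 B0 by simp
        hence False using d1 r by simp }
      ultimately show False using c by blast
    qed
  qed
qed

lemma gbary_eq:
  fixes A1 A2 A3 :: "real^2"
  assumes aff: "\<And>w1 w2 w3. w1 + w2 + w3 = 0 \<Longrightarrow> w1 *\<^sub>R A1 + w2 *\<^sub>R A2 + w3 *\<^sub>R A3 = 0 \<Longrightarrow> w1 = 0 \<and> w2 = 0 \<and> w3 = 0"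
    and c: "egamma s A1 = c1" "egamma s A2 = c2" "egamma s A3 = c3"
    and cp: "c1 > 0" "c2 > 0" "c3 > 0"
    and Wa: "a1*c1 + a2*c2 + a3*c3 \<noteq> 0" and Wb: "b1*c1 + b2*c2 + b3*c3 \<noteq> 0"
    and eq: "gbary s A1 A2 A3 a1 a2 a3 = gbary s A1 A2 A3 b1 b2 b3"
  shows "a1 * (b1*c1 + b2*c2 + b3*c3) = b1 * (a1*c1 + a2*c2 + a3*c3)
       \<and> a2 * (b1*c1 + b2*c2 + b3*c3) = b2 * (a1*c1 + a2*c2 + a3*c3)
       \<and> a3 * (b1*c1 + b2*c2 + b3*c3) = b3 * (a1*c1 + a2*c2 + a3*c3)"
proof -
  define A where "A = a1*c1 + a2*c2 + a3*c3"
  define B where "B = b1*c1 + b2*c2 + b3*c3"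
  have A0: "A \<noteq> 0" and B0: "B \<noteq> 0" using Wa Wb A_def B_def by auto
  define w1 where "w1 = a1*c1/A - b1*c1/B"
  define w2 where "w2 = a2*c2/A - b2*c2/B"
  define w3 where "w3 = a3*c3/A - b3*c3/B"
  have s0: "w1 + w2 + w3 = 0"
  proof -
    have "w1 + w2 + w3 = (a1*c1 + a2*c2 + a3*c3)/A - (b1*c1 + b2*c2 + b3*c3)/B"
      unfolding w1_def w2_def w3_def by (simp add: add_divide_distrib diff_divide_distrib algebra_simps)
    also have "... = A/A - B/B" unfolding A_def B_def ..
    finally show ?thesis using A0 B0 by simp
  qed
  have ga: "gbary s A1 A2 A3 a1 a2 a3 = (1/A) *\<^sub>R ((a1*c1) *\<^sub>R A1 + (a2*c2) *\<^sub>R A2 + (a3*c3) *\<^sub>R A3)"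
    unfolding gbary_def c A_def by simp
  have gb: "gbary s A1 A2 A3 b1 b2 b3 = (1/B) *\<^sub>R ((b1*c1) *\<^sub>R A1 + (b2*c2) *\<^sub>R A2 + (b3*c3) *\<^sub>R A3)"
    unfolding gbary_def c B_def by simp
  have "w1 *\<^sub>R A1 + w2 *\<^sub>R A2 + w3 *\<^sub>R A3 = gbary s A1 A2 A3 a1 a2 a3 - gbary s A1 A2 A3 b1 b2 b3"
    unfolding ga gb w1_def w2_def w3_def by (simp add: scaleR_diff_left scaleR_add_right algebra_simps)
  hence s1: "w1 *\<^sub>R A1 + w2 *\<^sub>R A2 + w3 *\<^sub>R A3 = 0" using eq by simp
  have w: "w1 = 0" "w2 = 0" "w3 = 0" using aff[OF s0 s1] by auto
  have "a1*c1/A = b1*c1/B" using w(1) unfolding w1_def by simp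
  hence r1: "a1 * B = b1 * A" using A0 B0 cp by (simp add: field_simps)
  have "a2*c2/A = b2*c2/B" using w(2) unfolding w2_def by simp
  hence r2: "a2 * B = b2 * A" using A0 B0 cp by (simp add: field_simps)
  have "a3*c3/A = b3*c3/B" using w(3) unfolding w3_def by simp
  hence r3: "a3 * B = b3 * A" using A0 B0 cp by (simp add: field_simps)
  show ?thesis using r1 r2 r3 unfolding A_def B_def by simp
qed



theorem mainTheorem15:
  fixes s :: real and A1 A2 A3 Oc :: "real^2" and R m1 m2 m3 :: real
    and g12 g13 g23 D1 D2 F0 E1 E2 :: real and P :: "real^2" and C :: "(real^2) set"
    and F1 F2 m1' m2' m3' :: "real \<Rightarrow> real" and Ppm :: "real \<Rightarrow> real^2"
  assumes "g12 = egamma s (eplus s (- A1) A2)"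
      and "g13 = egamma s (eplus s (- A1) A3)"
      and "g23 = egamma s (eplus s (- A2) A3)"
      and "P = gbary s A1 A2 A3 m1 m2 m3"
      and "C = gcircle s Oc R"
      and "D1 = m1 * m2 * (g12 - 1) + m1 * m3 * (g13 - 1) + m2 * m3 * (g23 - 1)"
      and "D2 = (g12 - 1) * (g13 - 1) * (g23 - 1)"
      and "F0 = m1 * (g12 - 1) + m3 * (g23 - 1)"
      and "F1 = (\<lambda>\<sigma>::real. m1 * (g12 - 1) * (g13 - 1) + \<sigma> * sqrt (- D1 * D2))"
      and "F2 = (\<lambda>\<sigma>::real. - m3 * (g13 - 1) * (g23 - 1) + \<sigma> * sqrt (- D1 * D2))"
      and "m1' = (\<lambda>\<sigma>. F0 * F1 \<sigma> * (g23 - 1))"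
      and "m2' = (\<lambda>\<sigma>. F1 \<sigma> * F2 \<sigma>)"
      and "m3' = (\<lambda>\<sigma>. - F0 * F2 \<sigma> * (g12 - 1))"
      and "Ppm = (\<lambda>\<sigma>. gbary s A1 A2 A3 (m1' \<sigma>) (m2' \<sigma>) (m3' \<sigma>))"
      and "E1 = (m1 - m2 + m3) * (m1 * (g12 - 1) + m3 * (g23 - 1)) - 2 * m1 * m3 * (g13 - 1)"
      and "E2 = - m1 * (g12 - 1)\<^sup>2 + m3 * (g23 - 1)\<^sup>2 + m1 * (g12 - 1) * (g13 - 1)
                 - m3 * (g13 - 1) * (g23 - 1) + (m1 - m3) * (g12 - 1) * (g23 - 1)"
      and s_pos: "s > 0"
      and A_in: "A1 \<in> gdisc s" "A2 \<in> gdisc s" "A3 \<in> gdisc s"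
      and indep: "gyrobary_indep s A1 A2 A3"
      and circ: "Oc \<in> gdisc s" "gyrodist s Oc A1 = R" "gyrodist s Oc A2 = R" "gyrodist s Oc A3 = R"
      and den: "m1 * egamma s A1 + m2 * egamma s A2 + m3 * egamma s A3 \<noteq> 0"
      and P_in: "P \<in> gdisc s"
  shows "D2 > 0
    \<and> (D1 \<le> 0 \<longrightarrow>
         (\<forall>\<sigma>\<in>{1, -1}. m1' \<sigma> * egamma s A1 + m2' \<sigma> * egamma s A2 + m3' \<sigma> * egamma s A3 \<noteq> 0) \<longrightarrow>
         {T. tangency_point s C P T} = {Ppm 1, Ppm (-1)})
    \<and> ((\<exists>T1 T2. T1 \<noteq> T2 \<and> tangency_point s C P T1 \<and> tangency_point s C P T2) \<longleftrightarrow> D1 < 0)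
    \<and> (D1 < 0 \<longleftrightarrow> gyrodist s Oc P > R)
    \<and> ({T. tangency_point s C P T} = {P} \<longleftrightarrow> D1 = 0)
    \<and> (D1 = 0 \<longleftrightarrow> gyrodist s Oc P = R)
    \<and> ({T. tangency_point s C P T} = {} \<longleftrightarrow> D1 > 0)
    \<and> (D1 > 0 \<longleftrightarrow> gyrodist s Oc P < R)
    \<and> (D1 \<le> 0 \<longrightarrow> (\<forall>\<sigma>\<in>{1, -1}.
          (m1' \<sigma>)\<^sup>2 + (m2' \<sigma>)\<^sup>2 + (m3' \<sigma>)\<^sup>2
            + 2 * (m1' \<sigma> * m2' \<sigma> * g12 + m1' \<sigma> * m3' \<sigma> * g13 + m2' \<sigma> * m3' \<sigma> * g23)
          = (D2 * E1 + \<sigma> * sqrt (- D1 * D2) * E2)\<^sup>2))"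
proof -
  note g12d = assms(1) and g13d = assms(2) and g23d = assms(3) and Pd = assms(4) and Cd = assms(5)
    and D1d = assms(6) and D2d = assms(7) and F0d = assms(8) and F1d = assms(9) and F2d = assms(10)
    and m1d = assms(11) and m2d = assms(12) and m3d = assms(13) and Ppmd = assms(14) and E1d = assms(15) and E2d = assms(16)
  have s: "s > 0" by (rule s_pos)
  have nA1: "norm A1 < s" and nA2: "norm A2 < s" and nA3: "norm A3 < s" using A_in by (auto simp: gdisc_def)
  have nO: "norm Oc < s" using circ(1) by (simp add: gdisc_def)
  have nP: "norm P < s" using P_in by (simp add: gdisc_def)
  define c1 where "c1 = egamma s A1"
  define c2 where "c2 = egamma s A2"
  define c3 where "c3 = egamma s A3"
  have c1p: "c1 > 0" and c2p: "c2 > 0" and c3p: "c3 > 0" using egamma_props(1) s nA1 nA2 nA3 c1_def c2_def c3_def by auto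
  have nn: "\<And>X::real^2. (norm X)^2 = X \<bullet> X" by (simp add: power2_norm_eq_inner)
  have h11: "c1 * c1 * (1 - (A1 \<bullet> A1)/s^2) = 1" using egamma_props(2)[OF s nA1] unfolding c1_def nn by (simp add: power2_eq_square)
  have h22: "c2 * c2 * (1 - (A2 \<bullet> A2)/s^2) = 1" using egamma_props(2)[OF s nA2] unfolding c2_def nn by (simp add: power2_eq_square)
  have h33: "c3 * c3 * (1 - (A3 \<bullet> A3)/s^2) = 1" using egamma_props(2)[OF s nA3] unfolding c3_def nn by (simp add: power2_eq_square)
  have h12: "c1 * c2 * (1 - (A1 \<bullet> A2)/s^2) = g12" unfolding g12d c1_def c2_def using egamma_gd[OF s nA1 nA2] by simp
  have h13: "c1 * c3 * (1 - (A1 \<bullet> A3)/s^2) = g13" unfolding g13d c1_def c3_def using egamma_gd[OF s nA1 nA3] by simp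
  have h23: "c2 * c3 * (1 - (A2 \<bullet> A3)/s^2) = g23" unfolding g23d c2_def c3_def using egamma_gd[OF s nA2 nA3] by simp
  have aff: "\<And>w1 w2 w3. w1 + w2 + w3 = 0 \<Longrightarrow> w1 *\<^sub>R A1 + w2 *\<^sub>R A2 + w3 *\<^sub>R A3 = 0 \<Longrightarrow> w1 = 0 \<and> w2 = 0 \<and> w3 = 0"
    using affind[OF s nA1 nA2 nA3 indep] by blast
  have ne12: "A1 \<noteq> A2" using aff[of 1 "-1" 0] by auto
  have ne13: "A1 \<noteq> A3" using aff[of 1 0 "-1"] by auto
  have ne23: "A2 \<noteq> A3" using aff[of 0 1 "-1"] by auto
  define x where "x = g12 - 1"
  define y where "y = g13 - 1"
  define z where "z = g23 - 1"
  have xp: "x > 0" unfolding x_def g12d using gamma_gt1[OF s nA1 nA2] ne12 by auto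
  have yp: "y > 0" unfolding y_def g13d using gamma_gt1[OF s nA1 nA3] ne13 by auto
  have zp: "z > 0" unfolding z_def g23d using gamma_gt1[OF s nA2 nA3] ne23 by auto
  have D2x: "D2 = x*y*z" unfolding D2d x_def y_def z_def by simp
  have D2p: "D2 > 0" unfolding D2x using xp yp zp by simp
  have D1x: "D1 = m1*m2*x + m1*m3*y + m2*m3*z" unfolding D1d x_def y_def z_def by simp
  have Rd: "R = norm (eplus s (- Oc) A1)" using circ(2) by (simp add: gyrodist_def)
  have R0: "R \<ge> 0" unfolding Rd by simp
  have Rs: "R < s" unfolding Rd by (rule gd_lt[OF s nO nA1])
  have Rpos: "R > 0"
  proof (rule ccontr)
    assume "\<not> R > 0"
    hence R00: "R = 0" using R0 by simp
    have "\<And>X. norm X < s \<Longrightarrow> gyrodist s Oc X = 0 \<Longrightarrow> X = Oc"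
    proof -
      fix X :: "real^2" assume X: "norm X < s" and g: "gyrodist s Oc X = 0"
      have p: "1 - (Oc \<bullet> X)/s^2 > 0" using one_minus_inner_pos[OF s nO X] .
      have "eplus s (- Oc) X = 0" using g by (simp add: gyrodist_def)
      hence "(1 / (1 - (Oc \<bullet> X)/s^2)) *\<^sub>R Lmap s Oc (X - Oc) = 0" using eplus_affine[OF s nO] by simp
      moreover have "(1 / (1 - (Oc \<bullet> X)/s^2)) > 0" using p by simp
      ultimately have "Lmap s Oc (X - Oc) = 0" by (metis less_irrefl scaleR_eq_0_iff)
      thus "X = Oc" using Lmap_inj[OF s nO] by force
    qed
    hence "A1 = Oc" "A2 = Oc" using circ(2,3) R00 nA1 nA2 by auto
    thus False using ne12 by simp
  qed
  define \<kappa> where "\<kappa> = 1 - R^2/s^2"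
  define \<mu> where "\<mu> = 1 - (norm Oc)^2/s^2"
  have kp: "\<kappa> > 0" unfolding \<kappa>_def using disc_pos[of s R] s Rs R0 by simp
  have k1: "\<kappa> < 1" unfolding \<kappa>_def using Rpos s by simp
  have mp: "\<mu> > 0" unfolding \<mu>_def using disc_pos[OF s nO] .
  have crel: "\<And>X. norm X < s \<Longrightarrow> (gyrodist s Oc X)^2 - R^2 = s^2 * Bq \<kappa> \<mu> s Oc 1 X 1 X / (1 - (Oc \<bullet> X)/s^2)^2"
    unfolding \<kappa>_def \<mu>_def using circ_rel[OF s nO] by blast
  have tpos: "\<And>X. norm X < s \<Longrightarrow> (1 - (Oc \<bullet> X)/s^2)^2 > 0"
  proof -
    fix X :: "real^2" assume "norm X < s"
    hence "1 - (Oc \<bullet> X)/s^2 > 0" using one_minus_inner_pos[OF s nO] by blast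
    thus "(1 - (Oc \<bullet> X)/s^2)^2 > 0" by (rule zero_less_power)
  qed
  have sgn: "\<And>X. norm X < s \<Longrightarrow>
      (gyrodist s Oc X > R \<longleftrightarrow> Bq \<kappa> \<mu> s Oc 1 X 1 X > 0) \<and>
      (gyrodist s Oc X = R \<longleftrightarrow> Bq \<kappa> \<mu> s Oc 1 X 1 X = 0) \<and>
      (gyrodist s Oc X < R \<longleftrightarrow> Bq \<kappa> \<mu> s Oc 1 X 1 X < 0)"
  proof -
    fix X :: "real^2" assume X: "norm X < s"
    define t where "t = (1 - (Oc \<bullet> X)/s^2)^2"
    have t: "t > 0" using tpos[OF X] t_def by simp
    have e: "(gyrodist s Oc X)^2 - R^2 = s^2 * Bq \<kappa> \<mu> s Oc 1 X 1 X / t" using crel[OF X] t_def by simp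
    have g0: "gyrodist s Oc X \<ge> 0" by (simp add: gyrodist_def)
    have s2: "s^2 > 0" using s by simp
    define f where "f = s^2 / t"
    have fp: "f > 0" unfolding f_def using t s2 by simp
    have e': "(gyrodist s Oc X)^2 - R^2 = f * Bq \<kappa> \<mu> s Oc 1 X 1 X" unfolding e f_def by simp
    define gd where "gd = gyrodist s Oc X"
    have a1: "gd > R \<longleftrightarrow> gd^2 - R^2 > 0"
      using power_less_imp_less_base[of R 2 gd] power_strict_mono[of R gd 2] g0 R0 unfolding gd_def by auto
    have a2: "gd = R \<longleftrightarrow> gd^2 - R^2 = 0"
      using power2_eq_iff_nonneg[of gd R] g0 R0 unfolding gd_def by auto
    have a3: "gd < R \<longleftrightarrow> gd^2 - R^2 < 0"
      using power_less_imp_less_base[of gd 2 R] power_strict_mono[of gd R 2] g0 R0 unfolding gd_def by auto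
    show "(gyrodist s Oc X > R \<longleftrightarrow> Bq \<kappa> \<mu> s Oc 1 X 1 X > 0) \<and>
      (gyrodist s Oc X = R \<longleftrightarrow> Bq \<kappa> \<mu> s Oc 1 X 1 X = 0) \<and>
      (gyrodist s Oc X < R \<longleftrightarrow> Bq \<kappa> \<mu> s Oc 1 X 1 X < 0)"
      unfolding gd_def[symmetric] a1 a2 a3 e'[folded gd_def] using fp by (simp add: zero_less_mult_iff mult_less_0_iff)
  qed
  have Ceq: "C = {X. Bq \<kappa> \<mu> s Oc 1 X 1 X = 0}"
  proof -
    have "\<And>X. X \<in> C \<longleftrightarrow> Bq \<kappa> \<mu> s Oc 1 X 1 X = 0"
    proof -
      fix X :: "real^2"
      show "X \<in> C \<longleftrightarrow> Bq \<kappa> \<mu> s Oc 1 X 1 X = 0"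
      proof
        assume "X \<in> C"
        hence "norm X < s" "gyrodist s Oc X = R" unfolding Cd gcircle_def gdisc_def by auto
        thus "Bq \<kappa> \<mu> s Oc 1 X 1 X = 0" using sgn by blast
      next
        assume Q: "Bq \<kappa> \<mu> s Oc 1 X 1 X = 0"
        hence X: "norm X < s" using Qzero_disc[OF s nO kp mp] by blast
        hence "gyrodist s Oc X = R" using sgn Q by blast
        thus "X \<in> C" unfolding Cd gcircle_def gdisc_def using X by simp
      qed
    qed
    thus ?thesis by blast
  qed
  have Csub: "C \<subseteq> gdisc s" unfolding Cd gcircle_def by blast
  have tang: "\<And>T. tangency_point s C P T \<longleftrightarrow> Bq \<kappa> \<mu> s Oc 1 T 1 T = 0 \<and> Bq \<kappa> \<mu> s Oc 1 T 1 P = 0"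
    using tangent_char[of \<kappa> \<mu> s C Oc P] kp mp s Ceq Csub by simp
  have QA: "\<And>X. X \<in> {A1, A2, A3} \<Longrightarrow> Bq \<kappa> \<mu> s Oc 1 X 1 X = 0"
    using sgn nA1 nA2 nA3 circ(2,3,4) by auto
  define \<beta> where "\<beta> = sqrt (\<mu> / \<kappa>)"
  have tb: "\<And>X c. Bq \<kappa> \<mu> s Oc 1 X 1 X = 0 \<Longrightarrow> norm X < s \<Longrightarrow> c > 0 \<Longrightarrow> c * c * (1 - (X \<bullet> X)/s^2) = 1
      \<Longrightarrow> c * (1 - (Oc \<bullet> X)/s^2) = \<beta>"
  proof -
    fix X :: "real^2" and c :: real
    assume Q: "Bq \<kappa> \<mu> s Oc 1 X 1 X = 0" and X: "norm X < s" and c: "c > 0" and h: "c * c * (1 - (X \<bullet> X)/s^2) = 1"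
    have t: "1 - (Oc \<bullet> X)/s^2 > 0" using one_minus_inner_pos[OF s nO X] .
    have e: "\<kappa> * (1 - (Oc \<bullet> X)/s^2)^2 = \<mu> * (1 - (X \<bullet> X)/s^2)" using Q unfolding Bq_def by (simp add: power2_eq_square mult.assoc)
    have "\<kappa> * (c * (1 - (Oc \<bullet> X)/s^2))^2 = \<mu> * (c * c * (1 - (X \<bullet> X)/s^2))"
    proof -
      define tt where "tt = 1 - (Oc \<bullet> X)/s^2"
      define bb where "bb = 1 - (X \<bullet> X)/s^2"
      have e2: "\<kappa> * tt^2 = \<mu> * bb" using e unfolding tt_def bb_def .
      have "\<kappa> * (c * tt)^2 = c * c * (\<kappa> * tt^2)" by (simp add: power2_eq_square algebra_simps)
      also have "... = \<mu> * (c * c * bb)" unfolding e2 by (simp add: algebra_simps)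
      finally show ?thesis unfolding tt_def bb_def .
    qed
    hence "\<kappa> * (c * (1 - (Oc \<bullet> X)/s^2))^2 = \<mu>" using h by simp
    hence "(c * (1 - (Oc \<bullet> X)/s^2))^2 = \<mu> / \<kappa>" using kp by (simp add: field_simps)
    moreover have "c * (1 - (Oc \<bullet> X)/s^2) > 0" using c t by simp
    ultimately show "c * (1 - (Oc \<bullet> X)/s^2) = \<beta>" unfolding \<beta>_def by (metis abs_of_pos real_sqrt_abs)
  qed
  have t1: "c1 * (1 - (Oc \<bullet> A1)/s^2) = \<beta>" using tb[OF QA nA1 c1p h11] by simp
  have t2: "c2 * (1 - (Oc \<bullet> A2)/s^2) = \<beta>" using tb[OF QA nA2 c2p h22] by simp
  have t3: "c3 * (1 - (Oc \<bullet> A3)/s^2) = \<beta>" using tb[OF QA nA3 c3p h33] by simp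
  have kb: "\<kappa> * \<beta>^2 = \<mu>" unfolding \<beta>_def using kp mp by simp
  note bil1 = bil[OF s t1 t2 t3 h12 h13 h23 h11 h22 h33 kb]
  have gB: "\<And>n1 n2 n3 p1 p2 p3. n1*c1 + n2*c2 + n3*c3 \<noteq> 0 \<Longrightarrow> p1*c1 + p2*c2 + p3*c3 \<noteq> 0 \<Longrightarrow>
     Bq \<kappa> \<mu> s Oc 1 (gbary s A1 A2 A3 n1 n2 n3) 1 (gbary s A1 A2 A3 p1 p2 p3)
     = (1/(n1*c1 + n2*c2 + n3*c3)) * (1/(p1*c1 + p2*c2 + p3*c3)) *
       (- \<mu> * (n1*p2*x + n2*p1*x + n1*p3*y + n3*p1*y + n2*p3*z + n3*p2*z))"
    unfolding x_def y_def z_def bil1[symmetric] by (rule gbary_Bq) (simp_all add: c1_def c2_def c3_def)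
  define W where "W = m1*c1 + m2*c2 + m3*c3"
  have W0: "W \<noteq> 0" using den unfolding W_def c1_def c2_def c3_def .
  have QP0: "Bq \<kappa> \<mu> s Oc 1 P 1 P = (1/W) * (1/W) * (- \<mu> * (m1*m2*x + m2*m1*x + m1*m3*y + m3*m1*y + m2*m3*z + m3*m2*z))"
    unfolding Pd W_def by (rule gB) (use W0 in \<open>simp_all add: W_def\<close>)
  have QP: "Bq \<kappa> \<mu> s Oc 1 P 1 P = - 2 * \<mu> * D1 / W^2"
    unfolding QP0 D1x using W0 by (simp add: field_simps power2_eq_square)
  have W2: "W^2 > 0" using W0 by simp
  define K where "K = 2 * \<mu> / W^2"
  have Kp: "K > 0" unfolding K_def using mp W2 by simp
  have QPK: "Bq \<kappa> \<mu> s Oc 1 P 1 P = K * (- D1)" unfolding QP K_def using W0 by (simp add: field_simps)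
  have QPpos: "Bq \<kappa> \<mu> s Oc 1 P 1 P > 0 \<longleftrightarrow> D1 < 0"
    unfolding QPK using Kp by (simp add: zero_less_mult_iff mult_less_0_iff)
  have QPneg: "Bq \<kappa> \<mu> s Oc 1 P 1 P < 0 \<longleftrightarrow> D1 > 0"
    unfolding QPK using Kp by (simp add: zero_less_mult_iff mult_less_0_iff)
  have QPz: "Bq \<kappa> \<mu> s Oc 1 P 1 P = 0 \<longleftrightarrow> D1 = 0" using QPpos QPneg by linarith
  have QO: "Bq \<kappa> \<mu> s Oc 1 Oc 1 Oc < 0"
  proof -
    have mu': "1 - (Oc \<bullet> Oc)/s^2 = \<mu>" unfolding \<mu>_def nn ..
    have "Bq \<kappa> \<mu> s Oc 1 Oc 1 Oc = \<kappa> * (1 - (Oc \<bullet> Oc)/s^2) * (1 - (Oc \<bullet> Oc)/s^2) - \<mu> * (1 - (Oc \<bullet> Oc)/s^2)"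
      unfolding Bq_def by simp
    also have "... = \<mu> * \<mu> * (\<kappa> - 1)" unfolding mu' by (simp add: algebra_simps)
    finally have "Bq \<kappa> \<mu> s Oc 1 Oc 1 Oc = \<mu> * \<mu> * (\<kappa> - 1)" .
    moreover have "\<mu> * \<mu> > 0" using mp by simp
    ultimately show ?thesis using k1 by (simp add: mult_pos_neg)
  qed
  have k0: "\<kappa> \<ge> 0" using kp by simp
  have TS: "{T. tangency_point s C P T} = {T. Bq \<kappa> \<mu> s Oc 1 T 1 T = 0 \<and> Bq \<kappa> \<mu> s Oc 1 T 1 P = 0}"
    using tang by blast
  have c_dist: "(\<exists>T1 T2. T1 \<noteq> T2 \<and> tangency_point s C P T1 \<and> tangency_point s C P T2) \<longleftrightarrow> D1 < 0"
  proof
    assume "\<exists>T1 T2. T1 \<noteq> T2 \<and> tangency_point s C P T1 \<and> tangency_point s C P T2"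
    then obtain T1 T2 where T: "T1 \<noteq> T2" "tangency_point s C P T1" "tangency_point s C P T2" by blast
    show "D1 < 0"
    proof (rule ccontr)
      assume "\<not> D1 < 0"
      hence "D1 = 0 \<or> D1 > 0" by linarith
      thus False
      proof
        assume "D1 = 0"
        hence "T1 = P" "T2 = P" using S_zero[OF k0 mp s] QPz T(2,3) tang by blast+
        thus False using T(1) by simp
      next
        assume "D1 > 0"
        thus False using S_neg[OF k0 mp s] QPneg T(2) tang by blast
      qed
    qed
  next
    assume "D1 < 0"
    hence "Bq \<kappa> \<mu> s Oc 1 P 1 P > 0" using QPpos by simp
    from S_two[OF k0 mp s this QO] show "\<exists>T1 T2. T1 \<noteq> T2 \<and> tangency_point s C P T1 \<and> tangency_point s C P T2"
      using tang by blast
  qed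
  have c_ext: "D1 < 0 \<longleftrightarrow> gyrodist s Oc P > R" using sgn[OF nP] QPpos by blast
  have c_on: "D1 = 0 \<longleftrightarrow> gyrodist s Oc P = R" using sgn[OF nP] QPz by blast
  have c_int: "D1 > 0 \<longleftrightarrow> gyrodist s Oc P < R" using sgn[OF nP] QPneg by blast
  have c_single: "{T. tangency_point s C P T} = {P} \<longleftrightarrow> D1 = 0"
  proof
    assume "{T. tangency_point s C P T} = {P}"
    hence "tangency_point s C P P" by blast
    hence "Bq \<kappa> \<mu> s Oc 1 P 1 P = 0" using tang by blast
    thus "D1 = 0" using QPz by simp
  next
    assume "D1 = 0"
    hence "Bq \<kappa> \<mu> s Oc 1 P 1 P = 0" using QPz by simp
    thus "{T. tangency_point s C P T} = {P}" unfolding TS using S_zero[OF k0 mp s] by blast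
  qed
  have c_empty: "{T. tangency_point s C P T} = {} \<longleftrightarrow> D1 > 0"
  proof
    assume E: "{T. tangency_point s C P T} = {}"
    show "D1 > 0"
    proof (rule ccontr)
      assume "\<not> D1 > 0"
      hence "D1 = 0 \<or> D1 < 0" by linarith
      thus False
      proof
        assume "D1 = 0" thus False using c_single E by simp
      next
        assume "D1 < 0" thus False using c_dist E by blast
      qed
    qed
  next
    assume "D1 > 0"
    hence "Bq \<kappa> \<mu> s Oc 1 P 1 P < 0" using QPneg by simp
    thus "{T. tangency_point s C P T} = {}" unfolding TS using S_neg[OF k0 mp s] by blast
  qed
  define r where "r = sqrt (- D1 * D2)"
  have F0e: "F0 = m1*x + m3*z" unfolding F0d x_def z_def by simp
  have F1e: "\<And>\<sigma>. F1 \<sigma> = m1*x*y + \<sigma>*r" unfolding F1d x_def y_def r_def by simp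
  have F2e: "\<And>\<sigma>. F2 \<sigma> = - m3*y*z + \<sigma>*r" unfolding F2d y_def z_def r_def by simp
  have m1e: "\<And>\<sigma>. m1' \<sigma> = F0 * F1 \<sigma> * z" unfolding m1d z_def by simp
  have m2e: "\<And>\<sigma>. m2' \<sigma> = F1 \<sigma> * F2 \<sigma>" unfolding m2d by simp
  have m3e: "\<And>\<sigma>. m3' \<sigma> = - F0 * F2 \<sigma> * x" unfolding m3d x_def by simp
  have E1x: "E1 = (m1 - m2 + m3) * (m1 * x + m3 * z) - 2 * m1 * m3 * y" unfolding E1d x_def y_def z_def by simp
  have E2x: "E2 = - m1 * x^2 + m3 * z^2 + m1 * x * y - m3 * y*z + (m1 - m3) * x*z" unfolding E2d x_def y_def z_def by simp
  have rr: "D1 \<le> 0 \<Longrightarrow> r^2 = - (m1*m2*x + m1*m3*y + m2*m3*z) * (x*y*z)"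
  proof -
    assume "D1 \<le> 0"
    hence "- D1 * D2 \<ge> 0" using D2p by (simp add: mult_nonpos_nonneg)
    hence "r^2 = - D1 * D2" unfolding r_def by simp
    thus ?thesis unfolding D1x D2x by simp
  qed
  have sig: "\<And>\<sigma>::real. \<sigma> \<in> {1, -1} \<Longrightarrow> \<sigma>^2 = 1" by auto
  have Dm: "m1' \<sigma> * m2' \<sigma> * x + m1' \<sigma> * m3' \<sigma> * y + m2' \<sigma> * m3' \<sigma> * z = 0" for \<sigma>
    using alg_D1[of m1 x m3 z y \<sigma> r] unfolding Let_def m1e m2e m3e F1e F2e F0e by simp
  have c_mass: "D1 \<le> 0 \<longrightarrow> (\<forall>\<sigma>\<in>{1, -1}.
          (m1' \<sigma>)\<^sup>2 + (m2' \<sigma>)\<^sup>2 + (m3' \<sigma>)\<^sup>2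
            + 2 * (m1' \<sigma> * m2' \<sigma> * g12 + m1' \<sigma> * m3' \<sigma> * g13 + m2' \<sigma> * m3' \<sigma> * g23)
          = (D2 * E1 + \<sigma> * sqrt (- D1 * D2) * E2)\<^sup>2)"
  proof (intro impI ballI)
    fix \<sigma> :: real assume D: "D1 \<le> 0" and \<sigma>: "\<sigma> \<in> {1, -1}"
    have Sm: "m1' \<sigma> + m2' \<sigma> + m3' \<sigma> = D2 * E1 + \<sigma> * r * E2"
      using alg_sum[OF rr[OF D] sig[OF \<sigma>]] unfolding Let_def m1e m2e m3e F1e F2e F0e E1x E2x D2x by simp
    define a where "a = m1' \<sigma>"
    define b where "b = m2' \<sigma>"
    define c where "c = m3' \<sigma>"
    have g: "g12 = x + 1" "g13 = y + 1" "g23 = z + 1" unfolding x_def y_def z_def by simp_all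
    have "a^2 + b^2 + c^2 + 2 * (a * b * g12 + a * c * g13 + b * c * g23) = (a + b + c)^2 + 2 * (a*b*x + a*c*y + b*c*z)"
      unfolding g by (simp add: power2_eq_square algebra_simps)
    also have "a*b*x + a*c*y + b*c*z = 0" using Dm[of \<sigma>] unfolding a_def b_def c_def .
    also have "a + b + c = D2 * E1 + \<sigma> * r * E2" using Sm unfolding a_def b_def c_def .
    finally show "(m1' \<sigma>)\<^sup>2 + (m2' \<sigma>)\<^sup>2 + (m3' \<sigma>)\<^sup>2
            + 2 * (m1' \<sigma> * m2' \<sigma> * g12 + m1' \<sigma> * m3' \<sigma> * g13 + m2' \<sigma> * m3' \<sigma> * g23)
          = (D2 * E1 + \<sigma> * sqrt (- D1 * D2) * E2)\<^sup>2" unfolding a_def b_def c_def r_def by simp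
  qed
  have c_set: "D1 \<le> 0 \<longrightarrow>
         (\<forall>\<sigma>\<in>{1, -1}. m1' \<sigma> * egamma s A1 + m2' \<sigma> * egamma s A2 + m3' \<sigma> * egamma s A3 \<noteq> 0) \<longrightarrow>
         {T. tangency_point s C P T} = {Ppm 1, Ppm (-1)}"
  proof (intro impI)
    assume D: "D1 \<le> 0" and dn: "\<forall>\<sigma>\<in>{1, -1}. m1' \<sigma> * egamma s A1 + m2' \<sigma> * egamma s A2 + m3' \<sigma> * egamma s A3 \<noteq> 0"
    have dn': "\<And>\<sigma>. \<sigma> \<in> {1, -1} \<Longrightarrow> m1' \<sigma> * c1 + m2' \<sigma> * c2 + m3' \<sigma> * c3 \<noteq> 0"
      using dn unfolding c1_def c2_def c3_def by blast
    show "{T. tangency_point s C P T} = {Ppm 1, Ppm (-1)}"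
    proof (cases "D1 = 0")
      case True
      have r0: "r = 0" unfolding r_def True by simp
      have F0n: "F0 \<noteq> 0"
      proof
        assume F00: "F0 = 0"
        have "D1 = m2 * F0 + m1*m3*y" unfolding D1x F0e by (simp add: algebra_simps)
        hence "m1*m3*y = 0" using True F00 by simp
        hence mm: "m1*m3 = 0" using yp by simp
        have "m2' 1 = - (m1*m3) * (x*y*y*z)" unfolding m2e F1e F2e r0 by (simp add: algebra_simps)
        hence "m2' 1 = 0" unfolding mm by simp
        moreover have "m1' 1 = 0" "m3' 1 = 0" unfolding m1e m3e F00 by simp_all
        ultimately show False using dn'[of 1] by simp
      qed
      define cc where "cc = F0 * D2"
      have cc0: "cc \<noteq> 0" unfolding cc_def using F0n D2p by simp
      have P\<sigma>: "\<And>\<sigma>. Ppm \<sigma> = P"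
      proof -
        fix \<sigma> :: real
        have "m1' \<sigma> = cc * m1" unfolding m1e F1e r0 cc_def D2x by (simp add: algebra_simps)
        moreover have "m3' \<sigma> = cc * m3" unfolding m3e F2e r0 cc_def D2x by (simp add: algebra_simps)
        moreover have "m2' \<sigma> = cc * m2"
        proof -
          have "m2 * F0 = - (m1*m3*y)" using True unfolding D1x F0e by (simp add: algebra_simps)
          have "m2' \<sigma> = - (m1*m3*y) * (x*y*z)" unfolding m2e F1e F2e r0 by (simp add: algebra_simps)
          also have "... = (m2 * F0) * (x*y*z)" using \<open>m2 * F0 = - (m1*m3*y)\<close> by simp
          finally show ?thesis unfolding cc_def D2x by (simp add: algebra_simps)
        qed
        ultimately show "Ppm \<sigma> = P" unfolding Ppmd Pd using gbary_scale[OF cc0] by simp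
      qed
      show ?thesis using c_single True P\<sigma> by simp
    next
      case False
      hence Dn: "D1 < 0" using D by simp
      have rp: "r > 0" unfolding r_def using Dn D2p by (simp add: mult_neg_pos)
      have inS: "\<And>\<sigma>. \<sigma> \<in> {1, -1} \<Longrightarrow> Bq \<kappa> \<mu> s Oc 1 (Ppm \<sigma>) 1 (Ppm \<sigma>) = 0 \<and> Bq \<kappa> \<mu> s Oc 1 (Ppm \<sigma>) 1 P = 0"
      proof -
        fix \<sigma> :: real assume \<sigma>: "\<sigma> \<in> {1, -1}"
        have W'0: "m1' \<sigma> * c1 + m2' \<sigma> * c2 + m3' \<sigma> * c3 \<noteq> 0" using dn'[OF \<sigma>] .
        have "Bq \<kappa> \<mu> s Oc 1 (Ppm \<sigma>) 1 (Ppm \<sigma>) = (1/(m1' \<sigma> * c1 + m2' \<sigma> * c2 + m3' \<sigma> * c3)) * (1/(m1' \<sigma> * c1 + m2' \<sigma> * c2 + m3' \<sigma> * c3))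
            * (- \<mu> * (m1' \<sigma> * m2' \<sigma> * x + m2' \<sigma> * m1' \<sigma> * x + m1' \<sigma> * m3' \<sigma> * y + m3' \<sigma> * m1' \<sigma> * y + m2' \<sigma> * m3' \<sigma> * z + m3' \<sigma> * m2' \<sigma> * z))"
          unfolding Ppmd by (rule gB[OF W'0 W'0])
        also have "m1' \<sigma> * m2' \<sigma> * x + m2' \<sigma> * m1' \<sigma> * x + m1' \<sigma> * m3' \<sigma> * y + m3' \<sigma> * m1' \<sigma> * y + m2' \<sigma> * m3' \<sigma> * z + m3' \<sigma> * m2' \<sigma> * z
            = 2 * (m1' \<sigma> * m2' \<sigma> * x + m1' \<sigma> * m3' \<sigma> * y + m2' \<sigma> * m3' \<sigma> * z)" by (simp add: algebra_simps)
        also have "... = 0" using Dm[of \<sigma>] by simp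
        finally have q1: "Bq \<kappa> \<mu> s Oc 1 (Ppm \<sigma>) 1 (Ppm \<sigma>) = 0" by simp
        have "Bq \<kappa> \<mu> s Oc 1 (Ppm \<sigma>) 1 P = (1/(m1' \<sigma> * c1 + m2' \<sigma> * c2 + m3' \<sigma> * c3)) * (1/(m1*c1 + m2*c2 + m3*c3))
            * (- \<mu> * (m1' \<sigma> * m2 * x + m2' \<sigma> * m1 * x + m1' \<sigma> * m3 * y + m3' \<sigma> * m1 * y + m2' \<sigma> * m3 * z + m3' \<sigma> * m2 * z))"
          unfolding Ppmd Pd by (rule gB[OF W'0 W0[unfolded W_def]])
        also have "m1' \<sigma> * m2 * x + m2' \<sigma> * m1 * x + m1' \<sigma> * m3 * y + m3' \<sigma> * m1 * y + m2' \<sigma> * m3 * z + m3' \<sigma> * m2 * z = 0"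
          using alg_phi[OF rr[OF D] sig[OF \<sigma>]] unfolding Let_def m1e m2e m3e F1e F2e F0e by simp
        finally have q2: "Bq \<kappa> \<mu> s Oc 1 (Ppm \<sigma>) 1 P = 0" by simp
        show "Bq \<kappa> \<mu> s Oc 1 (Ppm \<sigma>) 1 (Ppm \<sigma>) = 0 \<and> Bq \<kappa> \<mu> s Oc 1 (Ppm \<sigma>) 1 P = 0" using q1 q2 by simp
      qed
      have neq: "Ppm 1 \<noteq> Ppm (-1)"
      proof
        assume eq: "Ppm 1 = Ppm (-1)"
        have W1: "m1' 1 * c1 + m2' 1 * c2 + m3' 1 * c3 \<noteq> 0" using dn'[of 1] by simp
        have W2: "m1' (-1) * c1 + m2' (-1) * c2 + m3' (-1) * c3 \<noteq> 0" using dn'[of "-1"] by simp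
        have e: "m1' 1 * (m1' (-1) * c1 + m2' (-1) * c2 + m3' (-1) * c3) = m1' (-1) * (m1' 1 * c1 + m2' 1 * c2 + m3' 1 * c3)
          \<and> m2' 1 * (m1' (-1) * c1 + m2' (-1) * c2 + m3' (-1) * c3) = m2' (-1) * (m1' 1 * c1 + m2' 1 * c2 + m3' 1 * c3)
          \<and> m3' 1 * (m1' (-1) * c1 + m2' (-1) * c2 + m3' (-1) * c3) = m3' (-1) * (m1' 1 * c1 + m2' 1 * c2 + m3' 1 * c3)"
          using gbary_eq[OF aff _ _ _ c1p c2p c3p W1 W2] eq unfolding Ppmd c1_def c2_def c3_def by blast
        show False
          apply (rule dist_alg[of x y z r m1 m2 m3 F0 "F1 1" "F1 (-1)" "F2 1" "F2 (-1)" c1 c2 c3])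
          using xp yp zp rp rr[OF D] F0e W1 W2 e unfolding m1e m2e m3e by (simp_all add: F1e F2e)
      qed
      have "{T. tangency_point s C P T} = {Ppm 1, Ppm (-1)}"
      proof
        show "{Ppm 1, Ppm (-1)} \<subseteq> {T. tangency_point s C P T}" using inS tang by auto
      next
        show "{T. tangency_point s C P T} \<subseteq> {Ppm 1, Ppm (-1)}"
        proof
          fix T assume "T \<in> {T. tangency_point s C P T}"
          hence T: "Bq \<kappa> \<mu> s Oc 1 T 1 T = 0" "Bq \<kappa> \<mu> s Oc 1 T 1 P = 0" using tang by auto
          have e: "Bq \<kappa> \<mu> s Oc 1 P 1 P > 0" using QPpos Dn by simp
          have "Ppm 1 = Ppm (-1) \<or> Ppm 1 = T \<or> Ppm (-1) = T"
            using S_three[OF k0 mp s e] inS[of 1] inS[of "-1"] T by auto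
          thus "T \<in> {Ppm 1, Ppm (-1)}" using neq by auto
        qed
      qed
      thus ?thesis .
    qed
  qed
  show ?thesis using D2p c_set c_dist c_ext c_single c_on c_empty c_int c_mass by blast
qed


end
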